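(* Let $p\in(2,6)$ and $\mu>0$. Let $V:\mathbf{R}\to\mathbf{R}$ be continuous, non-negative, not identically zero, with $V(x)\to0$ as $|x|\to\infty$. Then $$\inf_{u\in H^1(\mathbf{R}),\ \|u\|^2_{L^2}=\mu}E_V(u)=E_0(\phi_\mu),$$ and the infimum is not attained. The same holds with $E_V$ replaced by $E_g$ for any $g>0$.
   Context: $E_0(u)=\frac12\|u'\|^2_{L^2(\mathbf{R})}-\frac1p\|u\|^p_{L^p(\mathbf{R})}$, $E_V(u)=E_0(u)+\frac12\int_{\mathbf{R}}V|u|^2\,dx$, $E_g(u)=E_0(u)+\frac g2|u(0)|^2$ for $u\in H^1(\mathbf{R})$. $\phi_\mu(x)=C_p\mu^{\frac{2}{6-p}}\operatorname{sech}^{\frac{2}{p-2}}(c_p\mu^{\frac{p-2}{6-p}}x)$ (constants depending only on $p$) is the unique positive even minimizer of $E_0$ at mass $\|u\|^2_{L^2}=\mu$. *)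

theory Defs
  imports "HOL-Analysis.Analysis"
begin

definition weak_deriv_L2 :: "(real \<Rightarrow> complex) \<Rightarrow> (real \<Rightarrow> complex) \<Rightarrow> bool" where
  "weak_deriv_L2 u w \<longleftrightarrow>
     w \<in> borel_measurable lborel \<and>
     integrable lborel (\<lambda>x. (cmod (w x))\<^sup>2) \<and>
     (\<forall>a b. a \<le> b \<longrightarrow> set_integrable lborel {a..b} w \<and>
                      u b - u a = (LINT x:{a..b}|lborel. w x))"

text \<open>In one dimension every H^1 class has a unique continuous representative;
  we identify H^1(R) with these representatives.\<close>
definition H1 :: "(real \<Rightarrow> complex) \<Rightarrow> bool" where
  "H1 u \<longleftrightarrow> continuous_on UNIV u \<and>
            integrable lborel (\<lambda>x. (cmod (u x))\<^sup>2) \<and>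
            (\<exists>w. weak_deriv_L2 u w)"

definition dH1 :: "(real \<Rightarrow> complex) \<Rightarrow> real \<Rightarrow> complex" where
  "dH1 u = (SOME w. weak_deriv_L2 u w)"

definition mass :: "(real \<Rightarrow> complex) \<Rightarrow> real" where
  "mass u = (LINT x|lborel. (cmod (u x))\<^sup>2)"

definition E0 :: "real \<Rightarrow> (real \<Rightarrow> complex) \<Rightarrow> real" where
  "E0 p u = (1/2) * (LINT x|lborel. (cmod (dH1 u x))\<^sup>2)
             - (1/p) * (LINT x|lborel. (cmod (u x)) powr p)"

definition EV :: "real \<Rightarrow> (real \<Rightarrow> real) \<Rightarrow> (real \<Rightarrow> complex) \<Rightarrow> real" where
  "EV p V u = E0 p u + (1/2) * (LINT x|lborel. V x * (cmod (u x))\<^sup>2)"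

definition Eg :: "real \<Rightarrow> real \<Rightarrow> (real \<Rightarrow> complex) \<Rightarrow> real" where
  "Eg p g u = E0 p u + (g/2) * (cmod (u 0))\<^sup>2"

definition sech :: "real \<Rightarrow> real" where
  "sech x = 1 / cosh x"

text \<open>Q solves Q'' - Q + Q^(p-1) = 0; M1 is its mass.\<close>
definition Qp :: "real \<Rightarrow> real \<Rightarrow> real" where
  "Qp p x = (p/2) powr (1/(p-2)) * (sech ((p-2)/2 * x)) powr (2/(p-2))"

definition M1 :: "real \<Rightarrow> real" where
  "M1 p = (LINT x|lborel. (Qp p x)\<^sup>2)"

text \<open>frequency omega with mass of omega^(1/(p-2)) Q(sqrt omega x) equal to mu\<close>
definition omega :: "real \<Rightarrow> real \<Rightarrow> real" where
  "omega p \<mu> = (\<mu> / M1 p) powr (2*(p-2)/(6-p))"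

text \<open>phi_mu(x) = C_p mu^(2/(6-p)) sech^(2/(p-2))(c_p mu^((p-2)/(6-p)) x)\<close>
definition phi :: "real \<Rightarrow> real \<Rightarrow> real \<Rightarrow> real" where
  "phi p \<mu> x = (omega p \<mu>) powr (1/(p-2)) * Qp p (sqrt (omega p \<mu>) * x)"

end

theory Submission
  imports Defs "HOL-Real_Asymp.Real_Asymp"
begin

lemma inv_cosh_deriv:
  fixes k :: real assumes "0 < k"
  shows "((\<lambda>x. 2/k * arctan (exp (k*x))) has_real_derivative cosh (k*x) powr (-1)) (at x)"
proof -
  have "((\<lambda>x. 2/k * arctan (exp (k*x))) has_real_derivative 2/k * (inverse (1 + (exp (k*x))\<^sup>2) * (exp (k*x) * k))) (at x)"
    by (auto intro!: derivative_eq_intros)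
  moreover have "2/k * (inverse (1 + (exp (k*x))\<^sup>2) * (exp (k*x) * k)) = cosh (k*x) powr (-1)"
  proof -
    have c: "cosh (k*x) > 0" by simp
    have "cosh (k*x) = (exp (k*x) + inverse (exp (k*x)))/2" by (simp add: cosh_def exp_minus)
    moreover have "1 + exp (k*x) * exp (k*x) > 0" by (simp add: add_pos_nonneg)
    ultimately show ?thesis using assms c
      by (simp add: powr_minus field_simps power2_eq_square)
  qed
  ultimately show ?thesis by simp
qed

lemma integrable_inv_cosh:
  fixes k :: real assumes "0 < k"
  shows "integrable lborel (\<lambda>x. cosh (k*x) powr (-1))"
proof -
  have "set_integrable lborel (einterval (-\<infinity>) \<infinity>) (\<lambda>x. cosh (k*x) powr (-1))"
  proof (rule interval_integral_FTC_nonneg(1))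
    show "\<And>x. - \<infinity> < ereal x \<Longrightarrow> ereal x < \<infinity> \<Longrightarrow> ((\<lambda>x. 2/k * arctan (exp (k*x))) has_real_derivative cosh (k*x) powr (-1)) (at x)"
      using inv_cosh_deriv[OF assms] by blast
    show "\<And>x. isCont (\<lambda>x. cosh (k*x) powr (-1)) x"
      by (auto intro!: continuous_intros)
    show "((((\<lambda>x. 2/k * arctan (exp (k*x)))) \<circ> real_of_ereal) \<longlongrightarrow> 2/k * arctan 0) (at_right (-\<infinity>))"
      unfolding ereal_tendsto_simps
    proof -
      have "((\<lambda>x. exp (k*x)) \<longlongrightarrow> 0) at_bot"
        using assms by (auto intro!: filterlim_compose[OF exp_at_bot] filterlim_tendsto_pos_mult_at_bot filterlim_ident)
      then have "((\<lambda>x. 2/k * arctan (exp (k*x))) \<longlongrightarrow> 2/k * arctan 0) at_bot"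
        by (intro tendsto_intros)
      then show "((\<lambda>x. 2/k * arctan (exp (k*x))) \<longlongrightarrow> 2/k * arctan 0) at_bot" .
    qed
    show "((((\<lambda>x. 2/k * arctan (exp (k*x)))) \<circ> real_of_ereal) \<longlongrightarrow> 2/k * (pi/2)) (at_left \<infinity>)"
      unfolding ereal_tendsto_simps
    proof -
      have "filterlim (\<lambda>x. exp (k*x)) at_top at_top"
        using assms by (auto intro!: filterlim_compose[OF exp_at_top] filterlim_tendsto_pos_mult_at_top filterlim_ident)
      then have "((\<lambda>x. arctan (exp (k*x))) \<longlongrightarrow> pi/2) at_top"
        by (rule filterlim_compose[OF tendsto_arctan_at_top])
      then show "((\<lambda>x. 2/k * arctan (exp (k*x))) \<longlongrightarrow> 2/k * (pi/2)) at_top"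
        by (intro tendsto_intros)
    qed
  qed auto
  then show ?thesis by (simp add: set_integrable_def)
qed

lemma integrable_cosh_powr:
  fixes k n :: real assumes "0 < k" "1 \<le> n"
  shows "integrable lborel (\<lambda>x. cosh (k*x) powr (-n))"
proof (rule Bochner_Integration.integrable_bound[OF integrable_inv_cosh[OF assms(1)]])
  show "(\<lambda>x. cosh (k*x) powr (-n)) \<in> borel_measurable lborel"
    unfolding measurable_lborel2 by (intro borel_measurable_continuous_onI continuous_intros) auto
  show "AE x in lborel. norm (cosh (k*x) powr (-n)) \<le> norm (cosh (k*x) powr (-1))"
  proof (intro AE_I2)
    fix x
    have "cosh (k*x) powr (-n) \<le> cosh (k*x) powr (-1)"
      using assms by (intro powr_mono) (auto simp: cosh_real_ge_1)
    then show "norm (cosh (k*x) powr (-n)) \<le> norm (cosh (k*x) powr (-1))" by simp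
  qed
qed

lemma set_integral_indicator_Int:
  fixes f :: "real \<Rightarrow> 'b::{banach, second_countable_topology}"
  shows "set_lebesgue_integral M A (\<lambda>x. indicat_real B x *\<^sub>R f x) = set_lebesgue_integral M (A \<inter> B) f"
  unfolding set_lebesgue_integral_def
  by (intro Bochner_Integration.integral_cong) (auto simp: indicator_def)

lemma sets_lborel_Icc: "sets (lborel::real measure) = sigma_sets UNIV (range (\<lambda>(a,b). {a..b::real}))"
proof -
  have "sets (lborel::real measure) = sets (sigma UNIV (range (\<lambda>(a,b). {a..b::real})))"
    by (subst borel_eq_atLeastAtMost[symmetric]) simp
  also have "\<dots> = sigma_sets UNIV (range (\<lambda>(a,b). {a..b::real}))"
    by (rule sets_measure_of) simp
  finally show ?thesis .
qed

lemma Int_stable_Icc: "Int_stable (range (\<lambda>(a,b). {a..b::real}))"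
proof (rule Int_stableI)
  fix A B assume "A \<in> range (\<lambda>(a,b). {a..b::real})" "B \<in> range (\<lambda>(a,b). {a..b::real})"
  then obtain a b c d where "A = {a..b}" "B = {c..d}" by auto
  then have "A \<inter> B = (\<lambda>(a,b). {a..b}) (max a c, min b d)" by auto
  then show "A \<inter> B \<in> range (\<lambda>(a,b). {a..b::real})" by blast
qed

lemma ae_zero_of_intervals:
  fixes f :: "real \<Rightarrow> complex"
  assumes int: "\<And>a b. set_integrable lborel {a..b} f"
    and zero: "\<And>a b. a \<le> b \<Longrightarrow> (LINT x:{a..b}|lborel. f x) = 0"
  shows "AE x in lborel. f x = 0"
proof -
  have n: "AE x in lborel. indicat_real {-real n..real n} x *\<^sub>R f x = 0" for n
  proof (rule sigma_finite_measure.density_zero[OF sigma_finite_lborel])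
    define g where "g = (\<lambda>x. indicat_real {-real n..real n} x *\<^sub>R f x)"
    have ig: "integrable lborel g"
      using int[of "-real n" "real n"] unfolding g_def set_integrable_def .
    then show "integrable lborel (\<lambda>x. indicat_real {-real n..real n} x *\<^sub>R f x)" unfolding g_def .
    have basicI: "set_lebesgue_integral lborel {a..b} g = 0" for a b
    proof -
      have "set_lebesgue_integral lborel {a..b} g = set_lebesgue_integral lborel ({a..b} \<inter> {-real n..real n}) f"
        unfolding g_def by (rule set_integral_indicator_Int)
      also have "{a..b} \<inter> {-real n..real n} = {max a (-real n)..min b (real n)}" by auto
      also have "set_lebesgue_integral lborel {max a (-real n)..min b (real n)} f = 0"
      proof (cases "max a (-real n) \<le> min b (real n)")
        case True then show ?thesis by (rule zero)
      next
        case False then have "{max a (-real n)..min b (real n)} = {}" by auto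
        then show ?thesis by (simp add: set_lebesgue_integral_def)
      qed
      finally show ?thesis .
    qed
    have g0: "integral\<^sup>L lborel g = 0"
    proof -
      have "integral\<^sup>L lborel g = set_lebesgue_integral lborel {-real n..real n} f"
        unfolding g_def set_lebesgue_integral_def ..
      also have "\<dots> = 0" by (rule zero) simp
      finally show ?thesis .
    qed
    fix A :: "real set" assume "A \<in> sets lborel"
    then have A: "A \<in> sigma_sets UNIV (range (\<lambda>(a,b). {a..b::real}))"
      using sets_lborel_Icc by simp
    have Gs: "range (\<lambda>(a,b). {a..b::real}) \<subseteq> Pow UNIV" by simp
    from Int_stable_Icc Gs A have "set_lebesgue_integral lborel A g = 0"
    proof (induct rule: sigma_sets_induct_disjoint)
      case (basic A) then show ?case using basicI by auto
    next
      case empty then show ?case by (simp add: set_lebesgue_integral_def)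
    next
      case (compl A)
      have Am: "A \<in> sets lborel"
        using compl(1) using sets_lborel_Icc by simp
      have "set_lebesgue_integral lborel (UNIV - A) g
          = integral\<^sup>L lborel (\<lambda>x. g x - indicat_real A x *\<^sub>R g x)"
        unfolding set_lebesgue_integral_def
        by (intro Bochner_Integration.integral_cong) (auto simp: indicator_def)
      also have "\<dots> = integral\<^sup>L lborel g - set_lebesgue_integral lborel A g"
        unfolding set_lebesgue_integral_def
        by (intro Bochner_Integration.integral_diff ig integrable_mult_indicator Am)
      finally show ?case using compl(2) g0 by simp
    next
      case (union A)
      have Am: "A i \<in> sets lborel" for i
        using union(2) using sets_lborel_Icc by auto
      have "set_lebesgue_integral lborel (\<Union>i. A i) g = (\<Sum>i. set_lebesgue_integral lborel (A i) g)"
      proof (rule lebesgue_integral_countable_add)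
        show "\<And>i j. i \<noteq> j \<Longrightarrow> A i \<inter> A j = {}" using union(1) by (auto simp: disjoint_family_on_def)
        show "set_integrable lborel (\<Union>i. A i) g"
          unfolding set_integrable_def using Am by (intro integrable_mult_indicator ig) auto
      qed (rule Am)
      then show ?case using union(3) by simp
    qed
    then show "set_lebesgue_integral lborel A (\<lambda>x. indicat_real {-real n..real n} x *\<^sub>R f x) = 0"
      unfolding g_def .
  qed
  have "AE x in lborel. \<forall>n. indicat_real {-real n..real n} x *\<^sub>R f x = 0"
    unfolding AE_all_countable using n by blast
  then show ?thesis
  proof (rule AE_mp, intro AE_I2 impI)
    fix x assume h: "\<forall>n. indicat_real {-real n..real n} x *\<^sub>R f x = 0"
    obtain n where "\<bar>x\<bar> \<le> real n" using real_arch_simple by blast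
    then have "x \<in> {-real n..real n}" by auto
    then show "f x = 0" using h[rule_format, of n] by simp
  qed
qed

lemma weak_deriv_unique:
  assumes "weak_deriv_L2 u w1" "weak_deriv_L2 u w2"
  shows "AE x in lborel. w1 x = w2 x"
proof -
  have "AE x in lborel. w1 x - w2 x = 0"
  proof (rule ae_zero_of_intervals)
    fix a b :: real
    show "set_integrable lborel {a..b} (\<lambda>x. w1 x - w2 x)"
    proof (cases "a \<le> b")
      case True then show ?thesis using assms unfolding weak_deriv_L2_def
        by (intro set_integral_diff) auto
    next
      case False then have "{a..b} = {}" by auto
      then show ?thesis by (simp add: set_integrable_def)
    qed
    assume ab: "a \<le> b"
    have i1: "set_integrable lborel {a..b} w1" and i2: "set_integrable lborel {a..b} w2"
      and e1: "u b - u a = (LINT x:{a..b}|lborel. w1 x)" and e2: "u b - u a = (LINT x:{a..b}|lborel. w2 x)"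
      using assms ab unfolding weak_deriv_L2_def by auto
    show "(LINT x:{a..b}|lborel. w1 x - w2 x) = 0"
      using set_integral_diff(2)[OF i1 i2] e1 e2 by simp
  qed
  then show ?thesis by auto
qed

lemma H1_dH1: "H1 u \<Longrightarrow> weak_deriv_L2 u (dH1 u)"
  unfolding H1_def dH1_def by (metis someI_ex)

lemma dH1_sq_integral:
  assumes "weak_deriv_L2 u w" "H1 u"
  shows "(LINT x|lborel. (cmod (dH1 u x))\<^sup>2) = (LINT x|lborel. (cmod (w x))\<^sup>2)"
proof -
  have "AE x in lborel. dH1 u x = w x"
    using weak_deriv_unique[OF H1_dH1[OF assms(2)] assms(1)] .
  moreover have "dH1 u \<in> borel_measurable lborel" "w \<in> borel_measurable lborel"
    using assms H1_dH1[OF assms(2)] unfolding weak_deriv_L2_def by auto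
  ultimately show ?thesis
    by (intro integral_cong_AE) auto
qed

lemma smooth_weak_deriv:
  fixes f f' :: "real \<Rightarrow> real"
  assumes deriv: "\<And>x. (f has_real_derivative f' x) (at x)"
    and cont: "continuous_on UNIV f'"
    and i2: "integrable lborel (\<lambda>x. (f' x)\<^sup>2)"
  shows "weak_deriv_L2 (\<lambda>x. complex_of_real (f x)) (\<lambda>x. complex_of_real (f' x))"
  unfolding weak_deriv_L2_def
proof (intro conjI allI impI)
  show "(\<lambda>x. complex_of_real (f' x)) \<in> borel_measurable lborel"
    unfolding measurable_lborel2
    by (intro borel_measurable_continuous_onI continuous_intros cont)
  show "integrable lborel (\<lambda>x. (cmod (complex_of_real (f' x)))\<^sup>2)"
    using i2 by simp
  fix a b :: real assume ab: "a \<le> b"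
  have cc: "continuous_on {a..b} (\<lambda>x. complex_of_real (f' x))"
    by (intro continuous_intros continuous_on_subset[OF cont]) auto
  show "set_integrable lborel {a..b} (\<lambda>x. complex_of_real (f' x))"
    by (rule borel_integrable_atLeastAtMost'[OF cc])
  have "(LBINT x=a..b. complex_of_real (f' x)) = complex_of_real (f b) - complex_of_real (f a)"
  proof (rule interval_integral_FTC_finite)
    show "continuous_on {min a b..max a b} (\<lambda>x. complex_of_real (f' x))"
      by (intro continuous_intros continuous_on_subset[OF cont]) auto
    fix x
    show "((\<lambda>x. complex_of_real (f x)) has_vector_derivative complex_of_real (f' x)) (at x within {min a b..max a b})"
      using has_vector_derivative_of_real[OF deriv[of x]] by (rule has_vector_derivative_at_within)
  qed
  then show "complex_of_real (f b) - complex_of_real (f a) = (LINT x:{a..b}|lborel. complex_of_real (f' x))"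
    using interval_integral_Icc[OF ab, of "\<lambda>x. complex_of_real (f' x)"] by simp
qed

lemma smooth_H1:
  fixes f f' :: "real \<Rightarrow> real"
  assumes deriv: "\<And>x. (f has_real_derivative f' x) (at x)"
    and cont: "continuous_on UNIV f'"
    and i1: "integrable lborel (\<lambda>x. (f x)\<^sup>2)"
    and i2: "integrable lborel (\<lambda>x. (f' x)\<^sup>2)"
  shows "H1 (\<lambda>x. complex_of_real (f x))"
    and "(LINT x|lborel. (cmod (dH1 (\<lambda>x. complex_of_real (f x)) x))\<^sup>2) = (LINT x|lborel. (f' x)\<^sup>2)"
proof -
  have w: "weak_deriv_L2 (\<lambda>x. complex_of_real (f x)) (\<lambda>x. complex_of_real (f' x))"
    by (rule smooth_weak_deriv[OF deriv cont i2])
  have cf: "continuous_on UNIV f"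
    using deriv by (meson DERIV_continuous continuous_at_imp_continuous_on)
  show h: "H1 (\<lambda>x. complex_of_real (f x))"
  proof -
    have "continuous_on UNIV (\<lambda>x. complex_of_real (f x))"
      by (intro continuous_on_of_real cf)
    then show ?thesis unfolding H1_def using w i1 by auto
  qed
  show "(LINT x|lborel. (cmod (dH1 (\<lambda>x. complex_of_real (f x)) x))\<^sup>2) = (LINT x|lborel. (f' x)\<^sup>2)"
    using dH1_sq_integral[OF w h] by simp
qed

lemma real_induct_le:
  fixes D :: "real \<Rightarrow> real"
  assumes ab: "a \<le> b" and cD: "continuous_on {a..b} D"
    and loc: "\<And>x. a \<le> x \<Longrightarrow> x < b \<Longrightarrow> \<exists>d>0. \<forall>y. x < y \<and> y < x + d \<and> y \<le> b \<longrightarrow> D y \<le> D x"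
  shows "D b \<le> D a"
proof -
  define T where "T = {a..b} \<inter> D -` {..D a}"
  have cT: "closed T" unfolding T_def
    by (rule continuous_closed_preimage[OF cD]) auto
  have aT: "a \<in> T" using ab by (auto simp: T_def)
  have bT: "bdd_above T" unfolding T_def by (auto intro: bdd_aboveI[of _ b])
  define s where "s = Sup T"
  have sT: "s \<in> T" unfolding s_def using closed_contains_Sup[OF _ bT cT] aT by auto
  then have sab: "a \<le> s" "s \<le> b" and Ds: "D s \<le> D a" by (auto simp: T_def)
  have "s = b"
  proof (rule ccontr)
    assume "s \<noteq> b"
    with sab have sb: "s < b" by auto
    from loc[OF sab(1) sb] obtain d where d: "d > 0" "\<forall>y. s < y \<and> y < s + d \<and> y \<le> b \<longrightarrow> D y \<le> D s" by auto
    define y where "y = min (s + d/2) b"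
    have y: "s < y" "y < s + d" "y \<le> b" using d sb by (auto simp: y_def)
    then have "D y \<le> D s" using d by auto
    then have "y \<in> T" using y sab Ds by (auto simp: T_def)
    then have "y \<le> s" unfolding s_def using bT by (rule cSup_upper)
    then show False using y by auto
  qed
  then show ?thesis using Ds by simp
qed

lemma wd_norm_bound:
  assumes wd: "weak_deriv_L2 u w" and ab: "a \<le> b"
  shows "(\<lambda>t. cmod (w t)) integrable_on {a..b}"
    and "cmod (u b - u a) \<le> integral {a..b} (\<lambda>t. cmod (w t))"
proof -
  have si: "set_integrable lborel {a..b} w" and e: "u b - u a = (LINT x:{a..b}|lborel. w x)"
    using wd ab unfolding weak_deriv_L2_def by auto
  have sn: "set_integrable lborel {a..b} (\<lambda>t. cmod (w t))"
    by (rule set_integrable_norm[OF si])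
  show "(\<lambda>t. cmod (w t)) integrable_on {a..b}"
    by (rule set_borel_integral_eq_integral(1)[OF sn])
  have "cmod (u b - u a) \<le> (LINT x:{a..b}|lborel. cmod (w x))"
    unfolding e by (rule set_integral_norm_bound[OF si])
  also have "\<dots> = integral {a..b} (\<lambda>t. cmod (w t))"
    by (rule set_borel_integral_eq_integral(2)[OF sn])
  finally show "cmod (u b - u a) \<le> integral {a..b} (\<lambda>t. cmod (w t))" .
qed

lemma prod_integrable:
  fixes f g :: "real \<Rightarrow> real"
  assumes cf: "continuous_on {a..b} f" and g: "g integrable_on {a..b}" and gnn: "\<And>t. 0 \<le> g t"
  shows "(\<lambda>t. f t * g t) integrable_on {a..b}"
proof -
  have "(\<lambda>t. f t * g t) absolutely_integrable_on {a..b}"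
  proof (rule absolutely_integrable_bounded_measurable_product_real)
    show "f \<in> borel_measurable (lebesgue_on {a..b})"
      by (rule continuous_imp_measurable_on_sets_lebesgue[OF cf]) auto
    show "{a..b} \<in> sets lebesgue" by simp
    show "bounded (f ` {a..b})"
      by (rule compact_imp_bounded[OF compact_continuous_image[OF cf]]) auto
    show "g absolutely_integrable_on {a..b}"
      by (rule nonnegative_absolutely_integrable_1[OF g gnn])
  qed
  then show ?thesis using set_lebesgue_integral_eq_integral(1) by blast
qed

lemma Hdiff_le1:
  fixes h :: "real \<Rightarrow> real"
  assumes ch: "continuous_on UNIV h" and hnn: "\<And>s. 0 \<le> h s"
    and r: "0 \<le> r" "r \<le> r'" and c: "\<And>s. r \<le> s \<Longrightarrow> s \<le> r' \<Longrightarrow> h s \<le> c"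
  shows "\<bar>integral {0..r'} h - integral {0..r} h\<bar> \<le> (r' - r) * c"
proof -
  have i: "h integrable_on {0..r'}"
    by (rule integrable_continuous_real, rule continuous_on_subset[OF ch]) auto
  have ir: "h integrable_on {r..r'}"
    by (rule integrable_continuous_real, rule continuous_on_subset[OF ch]) auto
  have "integral {0..r} h + integral {r..r'} h = integral {0..r'} h"
    by (rule Henstock_Kurzweil_Integration.integral_combine[OF r i])
  then have "integral {0..r'} h - integral {0..r} h = integral {r..r'} h" by simp
  moreover have "0 \<le> integral {r..r'} h"
    by (rule integral_nonneg[OF ir]) (use hnn in auto)
  moreover have "integral {r..r'} h \<le> integral {r..r'} (\<lambda>_. c)"
    by (rule integral_le[OF ir]) (use c in auto)
  moreover have "integral {r..r'} (\<lambda>_. c) = (r' - r) * c" using r by simp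
  ultimately show ?thesis by (simp del: integral_const_real)
qed

lemma Hdiff_le:
  fixes h :: "real \<Rightarrow> real"
  assumes ch: "continuous_on UNIV h" and hnn: "\<And>s. 0 \<le> h s"
    and r: "0 \<le> r" "0 \<le> r'" and c: "\<And>s. min r r' \<le> s \<Longrightarrow> s \<le> max r r' \<Longrightarrow> h s \<le> c"
  shows "\<bar>integral {0..r'} h - integral {0..r} h\<bar> \<le> \<bar>r' - r\<bar> * c"
proof (cases "r \<le> r'")
  case True
  then show ?thesis using Hdiff_le1[OF ch hnn r(1) True, of c] c by auto
next
  case False
  then have "r' \<le> r" by simp
  then have "\<bar>integral {0..r} h - integral {0..r'} h\<bar> \<le> (r - r') * c"
    using Hdiff_le1[OF ch hnn r(2) \<open>r' \<le> r\<close>, of c] c by auto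
  then show ?thesis using False by (simp add: abs_minus_commute)
qed

lemma H_increment_eps:
  fixes u w :: "real \<Rightarrow> complex" and h :: "real \<Rightarrow> real"
  assumes wd: "weak_deriv_L2 u w" and cu: "continuous_on UNIV u"
    and ch: "continuous_on UNIV h" and hnn: "\<And>s. 0 \<le> h s"
    and ab: "a \<le> b" and e: "0 < e"
  shows "\<bar>integral {0..cmod (u b)} h - integral {0..cmod (u a)} h\<bar>
          \<le> integral {a..b} (\<lambda>t. (h (cmod (u t)) + e) * cmod (w t))"
proof -
  define H where "H = (\<lambda>s. integral {0..s} h)"
  define g where "g = (\<lambda>t. (h (cmod (u t)) + e) * cmod (w t))"
  define I where "I = (\<lambda>y. integral {a..y} g)"
  have cg: "continuous_on UNIV (\<lambda>t. h (cmod (u t)) + e)"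
    by (intro continuous_intros continuous_on_compose2[OF ch] cu) auto
  have gi: "g integrable_on {x..y}" for x y
  proof (cases "x \<le> y")
    case True
    show ?thesis unfolding g_def
      by (rule prod_integrable[OF continuous_on_subset[OF cg] wd_norm_bound(1)[OF wd True]]) auto
  next
    case False then show ?thesis by (simp add: integrable_on_empty)
  qed
  have Icomb: "I y - I x = integral {x..y} g" if "a \<le> x" "x \<le> y" for x y
    using Henstock_Kurzweil_Integration.integral_combine[OF that gi[of a y]] unfolding I_def by simp
  have cI: "continuous_on {a..b} I"
    unfolding I_def by (rule indefinite_integral_continuous_1[OF gi])
  obtain R where R: "\<And>t. t \<in> {a..b} \<Longrightarrow> cmod (u t) \<le> R"
  proof -
    have "compact ((\<lambda>t. cmod (u t)) ` {a..b})"
      by (intro compact_continuous_image continuous_intros continuous_on_subset[OF cu]) auto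
    then have "bounded ((\<lambda>t. cmod (u t)) ` {a..b})" by (rule compact_imp_bounded)
    then obtain R where "\<forall>t\<in>{a..b}. norm (cmod (u t)) \<le> R"
      unfolding bounded_iff by auto
    then show ?thesis using that[of R] by simp
  qed
  have cH: "continuous_on {0..R} H"
    unfolding H_def
    by (rule indefinite_integral_continuous_1, rule integrable_continuous_real,
        rule continuous_on_subset[OF ch]) auto
  have cHu: "continuous_on {a..b} (\<lambda>t. H (cmod (u t)))"
    by (rule continuous_on_compose2[OF cH]) (use R in \<open>auto intro!: continuous_intros continuous_on_subset[OF cu]\<close>)
  have loc: "\<exists>d>0. \<forall>y. x < y \<and> y < x + d \<and> y \<le> b \<longrightarrow> \<bar>H (cmod (u y)) - H (cmod (u x))\<bar> \<le> I y - I x"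
    if x: "a \<le> x" "x < b" for x
  proof -
    define r where "r = cmod (u x)"
    have "isCont h r" using ch by (simp add: continuous_on_eq_continuous_at)
    then obtain d1 where d1: "d1 > 0" "\<And>s. dist s r < d1 \<Longrightarrow> dist (h s) (h r) < e/2"
      using e unfolding continuous_at_eps_delta by (metis half_gt_zero)
    have "isCont u x" using cu by (simp add: continuous_on_eq_continuous_at)
    then obtain d where d: "d > 0" "\<And>t. dist t x < d \<Longrightarrow> dist (u t) (u x) < d1"
      using d1(1) unfolding continuous_at_eps_delta by metis
    have "\<forall>y. x < y \<and> y < x + d \<and> y \<le> b \<longrightarrow> \<bar>H (cmod (u y)) - H (cmod (u x))\<bar> \<le> I y - I x"
    proof (intro allI impI)
      fix y assume y: "x < y \<and> y < x + d \<and> y \<le> b"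
      define r' where "r' = cmod (u y)"
      define c where "c = h r + e/2"
      have rr': "\<bar>r' - r\<bar> \<le> cmod (u y - u x)"
        unfolding r_def r'_def by (metis norm_triangle_ineq3)
      have "cmod (u y - u x) < d1" using d(2)[of y] y by (simp add: dist_norm)
      have hs: "h s \<le> c" if "min r r' \<le> s" "s \<le> max r r'" for s
      proof -
        have "dist s r < d1" using that rr' \<open>cmod (u y - u x) < d1\<close> by (auto simp: dist_real_def)
        then have "\<bar>h s - h r\<bar> < e/2" using d1(2)[of s] by (simp add: dist_real_def)
        then show ?thesis unfolding c_def by linarith
      qed
      have "\<bar>H r' - H r\<bar> \<le> \<bar>r' - r\<bar> * c"
        unfolding H_def by (rule Hdiff_le[OF ch hnn]) (auto simp: r_def r'_def hs)
      also have "\<dots> \<le> integral {x..y} (\<lambda>t. cmod (w t)) * c"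
      proof (rule mult_right_mono)
        show "\<bar>r' - r\<bar> \<le> integral {x..y} (\<lambda>t. cmod (w t))"
          using rr' wd_norm_bound(2)[OF wd, of x y] y by auto
        show "0 \<le> c" using hnn[of r] e by (simp add: c_def)
      qed
      also have "\<dots> = integral {x..y} (\<lambda>t. c * cmod (w t))"
        by (simp add: mult.commute)
      also have "\<dots> \<le> integral {x..y} g"
      proof (rule integral_le)
        show "(\<lambda>t. c * cmod (w t)) integrable_on {x..y}"
          using integrable_on_cmult_left[OF wd_norm_bound(1)[OF wd, of x y], of c] y by simp
        show "g integrable_on {x..y}" by (rule gi)
        fix t assume t: "t \<in> {x..y}"
        then have "dist t x < d" using y by (auto simp: dist_real_def)
        then have "dist (u t) (u x) < d1" by (rule d(2))
        then have "dist (cmod (u t)) r < d1"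
          unfolding r_def dist_real_def dist_norm by (metis norm_triangle_ineq3 order.strict_trans1)
        then have "dist (h (cmod (u t))) (h r) < e/2" by (rule d1(2))
        then have "\<bar>h (cmod (u t)) - h r\<bar> < e/2" by (simp add: dist_real_def)
        then have "c \<le> h (cmod (u t)) + e" unfolding c_def by linarith
        then show "c * cmod (w t) \<le> g t" unfolding g_def
          by (intro mult_right_mono) auto
      qed
      also have "\<dots> = I y - I x" using Icomb[of x y] x y by simp
      finally show "\<bar>H (cmod (u y)) - H (cmod (u x))\<bar> \<le> I y - I x"
        by (simp add: r_def r'_def)
    qed
    then show ?thesis using d(1) by blast
  qed
  have "(\<lambda>t. H (cmod (u t)) - I t) b \<le> (\<lambda>t. H (cmod (u t)) - I t) a"
  proof (rule real_induct_le[OF ab])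
    show "continuous_on {a..b} (\<lambda>t. H (cmod (u t)) - I t)"
      by (intro continuous_intros cHu cI)
    fix x assume "a \<le> x" "x < b"
    from loc[OF this] obtain d where "d > 0" "\<forall>y. x < y \<and> y < x + d \<and> y \<le> b \<longrightarrow> \<bar>H (cmod (u y)) - H (cmod (u x))\<bar> \<le> I y - I x" by blast
    then show "\<exists>d>0. \<forall>y. x < y \<and> y < x + d \<and> y \<le> b \<longrightarrow> H (cmod (u y)) - I y \<le> H (cmod (u x)) - I x"
      by (intro exI[of _ d]) (auto simp: abs_le_iff)
  qed
  moreover have "(\<lambda>t. - H (cmod (u t)) - I t) b \<le> (\<lambda>t. - H (cmod (u t)) - I t) a"
  proof (rule real_induct_le[OF ab])
    show "continuous_on {a..b} (\<lambda>t. - H (cmod (u t)) - I t)"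
      by (intro continuous_intros cHu cI)
    fix x assume "a \<le> x" "x < b"
    from loc[OF this] obtain d where "d > 0" "\<forall>y. x < y \<and> y < x + d \<and> y \<le> b \<longrightarrow> \<bar>H (cmod (u y)) - H (cmod (u x))\<bar> \<le> I y - I x" by blast
    then show "\<exists>d>0. \<forall>y. x < y \<and> y < x + d \<and> y \<le> b \<longrightarrow> - H (cmod (u y)) - I y \<le> - H (cmod (u x)) - I x"
      by (intro exI[of _ d]) (auto simp: abs_le_iff)
  qed
  moreover have "I a = 0" by (simp add: I_def)
  ultimately have "\<bar>H (cmod (u b)) - H (cmod (u a))\<bar> \<le> I b" by auto
  then show ?thesis unfolding H_def I_def g_def .
qed

lemma H_increment:
  fixes u w :: "real \<Rightarrow> complex" and h :: "real \<Rightarrow> real"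
  assumes wd: "weak_deriv_L2 u w" and cu: "continuous_on UNIV u"
    and ch: "continuous_on UNIV h" and hnn: "\<And>s. 0 \<le> h s"
    and ab: "a \<le> b"
  shows "\<bar>integral {0..cmod (u b)} h - integral {0..cmod (u a)} h\<bar>
          \<le> integral {a..b} (\<lambda>t. h (cmod (u t)) * cmod (w t))"
proof -
  define X where "X = \<bar>integral {0..cmod (u b)} h - integral {0..cmod (u a)} h\<bar>"
  define Y where "Y = integral {a..b} (\<lambda>t. h (cmod (u t)) * cmod (w t))"
  define C where "C = integral {a..b} (\<lambda>t. cmod (w t))"
  have iw: "(\<lambda>t. cmod (w t)) integrable_on {a..b}" by (rule wd_norm_bound(1)[OF wd ab])
  have C0: "0 \<le> C" unfolding C_def by (rule integral_nonneg[OF iw]) auto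
  have cg: "continuous_on UNIV (\<lambda>t. h (cmod (u t)))"
    by (intro continuous_intros continuous_on_compose2[OF ch] cu) auto
  have ihw: "(\<lambda>t. h (cmod (u t)) * cmod (w t)) integrable_on {a..b}"
    by (rule prod_integrable[OF continuous_on_subset[OF cg] iw]) auto
  have "X \<le> Y + e" if e: "0 < e" for e
  proof -
    define e' where "e' = e / (C + 1)"
    have e': "0 < e'" using e C0 by (simp add: e'_def)
    have "X \<le> integral {a..b} (\<lambda>t. (h (cmod (u t)) + e') * cmod (w t))"
      unfolding X_def by (rule H_increment_eps[OF wd cu ch hnn ab e'])
    also have "\<dots> = integral {a..b} (\<lambda>t. h (cmod (u t)) * cmod (w t) + e' * cmod (w t))"
      by (simp add: algebra_simps)
    also have "\<dots> = Y + e' * C"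
      unfolding Y_def C_def
      by (subst integral_add[OF ihw]) (auto intro: integrable_on_cmult_left[OF iw, of e', simplified])
    also have "e' * C \<le> e"
      using e C0 by (simp add: e'_def field_simps)
    finally show ?thesis by simp
  qed
  then have "X \<le> Y" by (rule field_le_epsilon)
  then show ?thesis unfolding X_def Y_def .
qed

lemma H_total:
  fixes u w :: "real \<Rightarrow> complex" and h :: "real \<Rightarrow> real"
  assumes wd: "weak_deriv_L2 u w" and cu: "continuous_on UNIV u"
    and ch: "continuous_on UNIV h" and hnn: "\<And>s. 0 \<le> h s"
    and int: "integrable lborel (\<lambda>t. h (cmod (u t)) * cmod (w t))"
    and ax: "a \<le> x0" and xb: "x0 \<le> b"
  shows "2 * integral {0..cmod (u x0)} h - integral {0..cmod (u a)} h - integral {0..cmod (u b)} h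
          \<le> (LINT t|lborel. h (cmod (u t)) * cmod (w t))"
proof -
  let ?g = "\<lambda>t. h (cmod (u t)) * cmod (w t)"
  have cg: "continuous_on UNIV (\<lambda>t. h (cmod (u t)))"
    by (intro continuous_intros continuous_on_compose2[OF ch] cu) auto
  have ig: "?g integrable_on {a..b}"
    using ax xb by (intro prod_integrable[OF continuous_on_subset[OF cg] wd_norm_bound(1)[OF wd]]) auto
  have "integral {a..x0} ?g + integral {x0..b} ?g = integral {a..b} ?g"
    by (rule Henstock_Kurzweil_Integration.integral_combine[OF ax xb ig])
  moreover have "integral {0..cmod (u x0)} h - integral {0..cmod (u a)} h \<le> integral {a..x0} ?g"
    using H_increment[OF wd cu ch hnn ax] by simp
  moreover have "integral {0..cmod (u x0)} h - integral {0..cmod (u b)} h \<le> integral {x0..b} ?g"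
    using H_increment[OF wd cu ch hnn xb] by (simp add: abs_minus_commute)
  moreover have "integral {a..b} ?g = (LINT t:{a..b}|lborel. ?g t)"
  proof -
    have "set_integrable lborel {a..b} ?g"
      unfolding set_integrable_def by (rule integrable_mult_indicator[OF _ int]) auto
    then show ?thesis by (simp add: set_borel_integral_eq_integral(2))
  qed
  moreover have "(LINT t:{a..b}|lborel. ?g t) \<le> (LINT t|lborel. ?g t)"
    unfolding set_lebesgue_integral_def
  proof (rule integral_mono[OF _ int])
    show "integrable lborel (\<lambda>t. indicat_real {a..b} t *\<^sub>R ?g t)"
      by (rule integrable_mult_indicator[OF _ int]) auto
    fix t show "indicat_real {a..b} t *\<^sub>R ?g t \<le> ?g t"
      using hnn[of "cmod (u t)"] by (auto simp: indicator_def)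
  qed
  ultimately show ?thesis by linarith
qed

lemma integrable_ind_Icc: "integrable lborel (indicat_real {a..b::real})"
  by (simp add: integrable_indicator_iff emeasure_lborel_Icc_eq)

lemma int_lower:
  fixes f :: "real \<Rightarrow> real"
  assumes f: "integrable lborel f" and nn: "\<And>x. 0 \<le> f x" and ab: "a \<le> b"
    and c: "\<And>x. x \<in> {a..b} \<Longrightarrow> c \<le> f x"
  shows "c * (b - a) \<le> (LINT x|lborel. f x)"
proof (cases "c \<le> 0")
  case True
  then have "c * (b - a) \<le> 0" using ab by (simp add: mult_nonpos_nonneg)
  also have "0 \<le> (LINT x|lborel. f x)" using nn by simp
  finally show ?thesis .
next
  case False
  have "(LINT x|lborel. c * indicator {a..b} x) \<le> (LINT x|lborel. f x)"
  proof (rule integral_mono[OF _ f])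
    show "integrable lborel (\<lambda>x. c * indicat_real {a..b} x)"
      using integrable_ind_Icc[of a b] by simp
    fix x show "c * indicat_real {a..b} x \<le> f x"
      using c nn False by (auto simp: indicator_def)
  qed
  also have "(LINT x|lborel. c * indicator {a..b} x) = c * (b - a)"
    using ab by simp
  finally show ?thesis by simp
qed

lemma H1_small_left:
  assumes H: "H1 u" and e: "0 < e"
  shows "\<exists>a. a < R \<and> cmod (u a) < e"
proof (rule ccontr)
  assume "\<not> ?thesis"
  then have ge: "\<And>a. a < R \<Longrightarrow> e \<le> cmod (u a)" by (meson leD not_less)
  define m where "m = (LINT x|lborel. (cmod (u x))\<^sup>2)"
  have iu: "integrable lborel (\<lambda>x. (cmod (u x))\<^sup>2)" using H unfolding H1_def by auto
  obtain n :: nat where n: "m / e\<^sup>2 < real n" using reals_Archimedean2 by blast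
  have "e\<^sup>2 * ((R - 1) - (R - 1 - real n)) \<le> m"
    unfolding m_def
  proof (rule int_lower[OF iu])
    fix x assume "x \<in> {R - 1 - real n..R - 1}"
    then have "e \<le> cmod (u x)" using ge[of x] by auto
    then show "e\<^sup>2 \<le> (cmod (u x))\<^sup>2" using e by (intro power_mono) auto
  qed auto
  then have "e\<^sup>2 * real n \<le> m" by simp
  moreover have "m < e\<^sup>2 * real n" using n e by (simp add: field_simps)
  ultimately show False by simp
qed

lemma H1_small_right:
  assumes H: "H1 u" and e: "0 < e"
  shows "\<exists>b. R < b \<and> cmod (u b) < e"
proof (rule ccontr)
  assume "\<not> ?thesis"
  then have ge: "\<And>a. R < a \<Longrightarrow> e \<le> cmod (u a)" by (meson leD not_less)
  define m where "m = (LINT x|lborel. (cmod (u x))\<^sup>2)"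
  have iu: "integrable lborel (\<lambda>x. (cmod (u x))\<^sup>2)" using H unfolding H1_def by auto
  obtain n :: nat where n: "m / e\<^sup>2 < real n" using reals_Archimedean2 by blast
  have "e\<^sup>2 * ((R + 1 + real n) - (R + 1)) \<le> m"
    unfolding m_def
  proof (rule int_lower[OF iu])
    fix x assume "x \<in> {R + 1..R + 1 + real n}"
    then have "e \<le> cmod (u x)" using ge[of x] by auto
    then show "e\<^sup>2 \<le> (cmod (u x))\<^sup>2" using e by (intro power_mono) auto
  qed auto
  then have "e\<^sup>2 * real n \<le> m" by simp
  moreover have "m < e\<^sup>2 * real n" using n e by (simp add: field_simps)
  ultimately show False by simp
qed

lemma H1_bounded:
  assumes H: "H1 u"
  shows "\<exists>C. \<forall>x. cmod (u x) \<le> C"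
proof -
  obtain w where wd: "weak_deriv_L2 u w" using H unfolding H1_def by auto
  have iu: "integrable lborel (\<lambda>x. (cmod (u x))\<^sup>2)" using H unfolding H1_def by auto
  have iw: "integrable lborel (\<lambda>x. (cmod (w x))\<^sup>2)" using wd unfolding weak_deriv_L2_def by auto
  define m where "m = (LINT x|lborel. (cmod (u x))\<^sup>2)"
  define q where "q = (LINT x|lborel. (cmod (w x))\<^sup>2)"
  have "cmod (u x) \<le> sqrt (m + 1) + (1 + q) / 2" for x
  proof -
    obtain y where y: "y \<in> {x..x+1}" "(cmod (u y))\<^sup>2 < m + 1"
    proof (rule ccontr)
      assume "\<not> thesis"
      then have "\<And>y. y \<in> {x..x+1} \<Longrightarrow> m + 1 \<le> (cmod (u y))\<^sup>2" using that by force
      then have "(m + 1) * ((x + 1) - x) \<le> m" unfolding m_def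
        by (intro int_lower[OF iu]) auto
      then show False by simp
    qed
    have uy: "cmod (u y) \<le> sqrt (m + 1)"
      using y(2) by (metis abs_norm_cancel real_le_rsqrt less_eq_real_def)
    have si: "set_integrable lborel {x..y} w" and e: "u y - u x = (LINT t:{x..y}|lborel. w t)"
      using wd y(1) unfolding weak_deriv_L2_def by auto
    have "cmod (u y - u x) \<le> (LINT t:{x..y}|lborel. cmod (w t))"
      unfolding e by (rule set_integral_norm_bound[OF si])
    also have "\<dots> = (LINT t|lborel. indicator {x..y} t * cmod (w t))"
      by (simp add: set_lebesgue_integral_def)
    also have "\<dots> \<le> (LINT t|lborel. indicator {x..y} t / 2 + (cmod (w t))\<^sup>2 / 2)"
    proof (rule integral_mono)
      show "integrable lborel (\<lambda>t. indicat_real {x..y} t * cmod (w t))"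
        using set_integrable_norm[OF si] by (simp add: set_integrable_def)
      show "integrable lborel (\<lambda>t. indicat_real {x..y} t / 2 + (cmod (w t))\<^sup>2 / 2)"
        using iw integrable_ind_Icc[of x y] by (intro Bochner_Integration.integrable_add) auto
      fix t
      have "indicat_real {x..y} t * cmod (w t) \<le> (indicat_real {x..y} t)\<^sup>2 / 2 + (cmod (w t))\<^sup>2 / 2"
        using sum_squares_bound[of "indicat_real {x..y} t" "cmod (w t)"]
        by (simp add: field_simps)
      also have "(indicat_real {x..y} t)\<^sup>2 = indicat_real {x..y} t" by (simp add: indicator_def)
      finally show "indicat_real {x..y} t * cmod (w t) \<le> indicat_real {x..y} t / 2 + (cmod (w t))\<^sup>2 / 2" .
    qed
    also have "\<dots> = (y - x) / 2 + q / 2"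
      using iw y(1) unfolding q_def
      using integrable_ind_Icc[of x y] by (subst Bochner_Integration.integral_add) auto
    also have "\<dots> \<le> (1 + q) / 2" using y(1) by auto
    finally have "cmod (u y - u x) \<le> (1 + q) / 2" .
    moreover have "cmod (u x) \<le> cmod (u y) + cmod (u y - u x)"
      by (metis norm_triangle_sub add.commute norm_minus_commute)
    ultimately show ?thesis using uy by linarith
  qed
  then show ?thesis by blast
qed

definition hM :: "real \<Rightarrow> real \<Rightarrow> real \<Rightarrow> real" where
  "hM p M s = sqrt (max 0 ((2/p) * (M powr (p-2) * s\<^sup>2 - \<bar>s\<bar> powr p)))"

lemma hM_cont: "0 < p \<Longrightarrow> continuous_on UNIV (hM p M)"
  unfolding hM_def
  by (intro continuous_intros continuous_on_powr') auto

lemma hM_nn: "0 \<le> hM p M s"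
  unfolding hM_def by simp

lemma powr_split2: fixes s p :: real shows "0 \<le> s \<Longrightarrow> s powr p = s powr (p-2) * s\<^sup>2"
proof (cases "s = 0")
  case False
  moreover assume "0 \<le> s"
  ultimately have "0 < s" by simp
  then have "s powr p = s powr (p - 2 + 2)" by simp
  also have "\<dots> = s powr (p-2) * s powr 2" by (simp only: powr_add)
  also have "s powr 2 = s\<^sup>2" using \<open>0 < s\<close> by (simp add: powr_numeral)
  finally show ?thesis .
qed simp

lemma powr_le_M: fixes s p M :: real shows "2 < p \<Longrightarrow> 0 \<le> s \<Longrightarrow> s \<le> M \<Longrightarrow> s powr p \<le> M powr (p-2) * s\<^sup>2"
  using powr_split2[of s p] powr_mono2[of "p-2" s M]
  by (simp add: mult_right_mono)

lemma hM_sq: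
  assumes "2 < p" "0 \<le> s" "s \<le> M"
  shows "(hM p M s)\<^sup>2 = (2/p) * (M powr (p-2) * s\<^sup>2 - s powr p)"
proof -
  have "0 \<le> (2/p) * (M powr (p-2) * s\<^sup>2 - s powr p)"
    using powr_le_M[OF assms] assms(1) by simp
  then show ?thesis using assms unfolding hM_def by simp
qed

lemma hM_le:
  assumes "2 < p" "0 \<le> s" "s \<le> M"
  shows "hM p M s \<le> sqrt ((2/p) * M powr (p-2)) * s"
proof -
  have "(hM p M s)\<^sup>2 \<le> (2/p) * M powr (p-2) * s\<^sup>2"
  proof -
    have e: "(hM p M s)\<^sup>2 = (2/p) * M powr (p-2) * s\<^sup>2 - (2/p) * s powr p"
      using hM_sq[OF assms] by (simp add: algebra_simps)
    have "0 \<le> (2/p) * s powr p" using assms(1) by simp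
    then show ?thesis using e by linarith
  qed
  then have "hM p M s \<le> sqrt ((2/p) * M powr (p-2) * s\<^sup>2)"
    by (simp add: real_le_rsqrt)
  also have "\<dots> = sqrt ((2/p) * M powr (p-2)) * sqrt (s\<^sup>2)"
    by (simp only: real_sqrt_mult)
  also have "\<dots> = sqrt ((2/p) * M powr (p-2)) * s"
    using assms by simp
  finally show ?thesis .
qed

lemma Hsup:
  fixes u w :: "real \<Rightarrow> complex" and h :: "real \<Rightarrow> real"
  assumes H: "H1 u" and wd: "weak_deriv_L2 u w"
    and ch: "continuous_on UNIV h" and hnn: "\<And>s. 0 \<le> h s"
    and int: "integrable lborel (\<lambda>t. h (cmod (u t)) * cmod (w t))"
    and Mb: "\<And>x. cmod (u x) \<le> M" and Msup: "\<And>e. 0 < e \<Longrightarrow> \<exists>x. M - e < cmod (u x)"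
  shows "2 * integral {0..M} h \<le> (LINT t|lborel. h (cmod (u t)) * cmod (w t))"
proof -
  define H where "H = (\<lambda>s. integral {0..s} h)"
  define L where "L = (LINT t|lborel. h (cmod (u t)) * cmod (w t))"
  have cu: "continuous_on UNIV u" using H unfolding H1_def by auto
  have M0: "0 \<le> M" using Mb[of 0] norm_ge_zero order_trans by blast
  have cH: "continuous_on {0..M} H"
    unfolding H_def
    by (rule indefinite_integral_continuous_1, rule integrable_continuous_real,
        rule continuous_on_subset[OF ch]) auto
  have "2 * H M \<le> L + \<eta>" if eta: "0 < \<eta>" for \<eta>
  proof -
    have e4: "0 < \<eta>/4" using eta by simp
    obtain d1 where d1: "d1 > 0" "\<And>s. s \<in> {0..M} \<Longrightarrow> dist s M < d1 \<Longrightarrow> dist (H s) (H M) < \<eta>/4"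
      using cH M0 e4 unfolding continuous_on_iff by (metis atLeastAtMost_iff order_refl)
    obtain d2 where d2: "d2 > 0" "\<And>s. s \<in> {0..M} \<Longrightarrow> dist s 0 < d2 \<Longrightarrow> dist (H s) (H 0) < \<eta>/4"
      using cH M0 e4 unfolding continuous_on_iff by (metis atLeastAtMost_iff order_refl)
    define d where "d = min d1 d2"
    have d: "d > 0" using d1 d2 by (simp add: d_def)
    obtain x0 where x0: "M - d < cmod (u x0)" using Msup[OF d] by blast
    obtain a where a: "a < x0" "cmod (u a) < d" using H1_small_left[OF H d] by blast
    obtain b where b: "x0 < b" "cmod (u b) < d" using H1_small_right[OF H d] by blast
    have H0: "H 0 = 0" by (simp add: H_def)
    have "dist (cmod (u x0)) M < d1" using x0 Mb[of x0] by (auto simp: d_def dist_real_def)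
    then have "dist (H (cmod (u x0))) (H M) < \<eta>/4" using d1(2)[of "cmod (u x0)"] Mb[of x0] by auto
    then have "\<bar>H (cmod (u x0)) - H M\<bar> < \<eta>/4" by (simp add: dist_real_def)
    then have "H M - \<eta>/4 < H (cmod (u x0))" by arith
    moreover have "H (cmod (u a)) < \<eta>/4"
    proof -
      have "dist (cmod (u a)) 0 < d2" using a by (auto simp: d_def dist_real_def)
      then have "dist (H (cmod (u a))) (H 0) < \<eta>/4" using d2(2)[of "cmod (u a)"] Mb[of a] by auto
      then have "\<bar>H (cmod (u a)) - H 0\<bar> < \<eta>/4" by (simp add: dist_real_def)
      then show ?thesis using H0 by arith
    qed
    moreover have "H (cmod (u b)) < \<eta>/4"
    proof -
      have "dist (cmod (u b)) 0 < d2" using b by (auto simp: d_def dist_real_def)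
      then have "dist (H (cmod (u b))) (H 0) < \<eta>/4" using d2(2)[of "cmod (u b)"] Mb[of b] by auto
      then have "\<bar>H (cmod (u b)) - H 0\<bar> < \<eta>/4" by (simp add: dist_real_def)
      then show ?thesis using H0 by arith
    qed
    moreover have "2 * H (cmod (u x0)) - H (cmod (u a)) - H (cmod (u b)) \<le> L"
      unfolding H_def L_def
      by (rule H_total[OF wd cu ch hnn int]) (use a b in auto)
    ultimately show ?thesis by linarith
  qed
  then have "2 * H M \<le> L" by (rule field_le_epsilon)
  then show ?thesis unfolding H_def L_def .
qed

lemma H1_cont: "H1 u \<Longrightarrow> continuous_on UNIV u"
  unfolding H1_def by auto

lemma H1_meas: "H1 u \<Longrightarrow> u \<in> borel_measurable lborel"
  using H1_cont[of u] by (simp add: borel_measurable_continuous_onI)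

lemma calib:
  fixes p M :: real and u :: "real \<Rightarrow> complex"
  assumes p: "2 < p" and H: "H1 u" and Mb: "\<And>x. cmod (u x) \<le> M"
    and Msup: "\<And>e. 0 < e \<Longrightarrow> \<exists>x. M - e < cmod (u x)"
  shows "integrable lborel (\<lambda>x. (cmod (dH1 u x) - hM p M (cmod (u x)))\<^sup>2)"
    and "2 * integral {0..M} (hM p M) - (1/p) * (M powr (p-2) * mass u)
          + (1/2) * (LINT x|lborel. (cmod (dH1 u x) - hM p M (cmod (u x)))\<^sup>2) \<le> E0 p u"
proof -
  define w where "w = dH1 u"
  have wd: "weak_deriv_L2 u w" unfolding w_def by (rule H1_dH1[OF H])
  define h where "h = hM p M"
  have ch: "continuous_on UNIV h" unfolding h_def by (rule hM_cont) (use p in auto)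
  have hnn: "\<And>s. 0 \<le> h s" unfolding h_def by (rule hM_nn)
  have mu[measurable]: "u \<in> borel_measurable borel" using H1_meas[OF H] by simp
  have mw[measurable]: "w \<in> borel_measurable borel" using wd unfolding weak_deriv_L2_def by simp
  have mh[measurable]: "h \<in> borel_measurable borel" using ch by (rule borel_measurable_continuous_onI)
  have iU2: "integrable lborel (\<lambda>x. (cmod (u x))\<^sup>2)" using H unfolding H1_def by auto
  have iW2: "integrable lborel (\<lambda>x. (cmod (w x))\<^sup>2)" using wd unfolding weak_deriv_L2_def by auto
  have iP: "integrable lborel (\<lambda>x. cmod (u x) powr p)"
  proof (rule Bochner_Integration.integrable_bound)
    show "integrable lborel (\<lambda>x. M powr (p-2) * (cmod (u x))\<^sup>2)"
      using iU2 by simp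
    show "(\<lambda>x. cmod (u x) powr p) \<in> borel_measurable lborel" by measurable
    show "AE x in lborel. norm (cmod (u x) powr p) \<le> norm (M powr (p-2) * (cmod (u x))\<^sup>2)"
      using powr_le_M[OF p _ Mb] by (auto intro!: AE_I2)
  qed
  have Geq: "(h (cmod (u x)))\<^sup>2 = (2/p) * (M powr (p-2) * (cmod (u x))\<^sup>2) - (2/p) * cmod (u x) powr p" for x
    unfolding h_def using hM_sq[OF p _ Mb[of x]] by (simp add: algebra_simps)
  have iG2: "integrable lborel (\<lambda>x. (h (cmod (u x)))\<^sup>2)"
    unfolding Geq using iU2 iP by simp
  have iGW: "integrable lborel (\<lambda>x. h (cmod (u x)) * cmod (w x))"
  proof (rule Bochner_Integration.integrable_bound)
    show "integrable lborel (\<lambda>x. (h (cmod (u x)))\<^sup>2 / 2 + (cmod (w x))\<^sup>2 / 2)"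
      using iG2 iW2 by simp
    show "(\<lambda>x. h (cmod (u x)) * cmod (w x)) \<in> borel_measurable lborel" by measurable
    show "AE x in lborel. norm (h (cmod (u x)) * cmod (w x)) \<le> norm ((h (cmod (u x)))\<^sup>2 / 2 + (cmod (w x))\<^sup>2 / 2)"
    proof (intro AE_I2)
      fix x
      have "h (cmod (u x)) * cmod (w x) \<le> (h (cmod (u x)))\<^sup>2 / 2 + (cmod (w x))\<^sup>2 / 2"
        using sum_squares_bound[of "h (cmod (u x))" "cmod (w x)"] by (simp add: field_simps)
      then show "norm (h (cmod (u x)) * cmod (w x)) \<le> norm ((h (cmod (u x)))\<^sup>2 / 2 + (cmod (w x))\<^sup>2 / 2)"
        using hnn[of "cmod (u x)"] by simp
    qed
  qed
  have Deq: "(cmod (w x) - h (cmod (u x)))\<^sup>2 = (cmod (w x))\<^sup>2 - 2 * (h (cmod (u x)) * cmod (w x)) + (h (cmod (u x)))\<^sup>2" for x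
    by (simp add: power2_diff algebra_simps)
  show iD: "integrable lborel (\<lambda>x. (cmod (dH1 u x) - hM p M (cmod (u x)))\<^sup>2)"
    unfolding w_def[symmetric] h_def[symmetric] Deq using iW2 iGW iG2 by simp
  define W2 where "W2 = (LINT x|lborel. (cmod (w x))\<^sup>2)"
  define A where "A = (LINT x|lborel. h (cmod (u x)) * cmod (w x))"
  define S where "S = (LINT x|lborel. (h (cmod (u x)))\<^sup>2)"
  define D where "D = (LINT x|lborel. (cmod (w x) - h (cmod (u x)))\<^sup>2)"
  define P where "P = (LINT x|lborel. cmod (u x) powr p)"
  define m where "m = mass u"
  define q where "q = 1 / p"
  define K where "K = M powr (p-2) * m"
  have mm: "m = (LINT x|lborel. (cmod (u x))\<^sup>2)" unfolding m_def mass_def ..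
  have DD: "D = W2 - 2 * A + S"
    unfolding D_def W2_def A_def S_def Deq using iW2 iGW iG2 by simp
  have SS: "S = 2 * (q * K) - 2 * (q * P)"
    unfolding S_def Geq K_def P_def q_def mm using iU2 iP by simp
  have EE: "E0 p u = W2 / 2 - q * P"
    unfolding E0_def W2_def P_def q_def w_def by simp
  have AA: "2 * integral {0..M} h \<le> A"
    unfolding A_def by (rule Hsup[OF H wd ch hnn iGW Mb Msup])
  show "2 * integral {0..M} (hM p M) - (1/p) * (M powr (p-2) * mass u)
          + (1/2) * (LINT x|lborel. (cmod (dH1 u x) - hM p M (cmod (u x)))\<^sup>2) \<le> E0 p u"
  proof -
    have "(1/p) * (M powr (p-2) * mass u) = q * K" unfolding q_def K_def m_def ..
    moreover have "(LINT x|lborel. (cmod (dH1 u x) - hM p M (cmod (u x)))\<^sup>2) = D"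
      unfolding D_def w_def h_def ..
    moreover have "integral {0..M} (hM p M) = integral {0..M} h" unfolding h_def ..
    ultimately show ?thesis using DD SS EE AA by linarith
  qed
qed

lemma max0_mult: "0 \<le> c \<Longrightarrow> max 0 (c * X) = c * max (0::real) X"
  by (cases "0 \<le> X") (auto simp: max_def mult_le_0_iff zero_le_mult_iff)

lemma sqrt_powr: "0 < M \<Longrightarrow> sqrt (M powr p) = M powr (p/2)"
proof (rule real_sqrt_unique)
  assume "0 < M"
  show "(M powr (p/2))\<^sup>2 = M powr p"
    by (simp add: power2_eq_square powr_add[symmetric])
  show "0 \<le> M powr (p/2)" by simp
qed

lemma hM_scale:
  assumes p: "2 < p" and M: "0 < M"
  shows "hM p M (M * s) = M powr (p/2) * hM p 1 s"
proof -
  have a: "M powr (p-2) * (M * s)\<^sup>2 = M powr p * s\<^sup>2"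
  proof -
    have "M powr (p-2) * M\<^sup>2 = M powr p" using powr_split2[of M p] M by simp
    then show ?thesis by (simp add: power_mult_distrib algebra_simps)
  qed
  have b: "\<bar>M * s\<bar> powr p = M powr p * \<bar>s\<bar> powr p"
    using M by (simp add: abs_mult powr_mult)
  have "(2/p) * (M powr (p-2) * (M * s)\<^sup>2 - \<bar>M * s\<bar> powr p) = M powr p * ((2/p) * (s\<^sup>2 - \<bar>s\<bar> powr p))"
    unfolding a b by (simp add: algebra_simps)
  then have "max 0 ((2/p) * (M powr (p-2) * (M * s)\<^sup>2 - \<bar>M * s\<bar> powr p)) = M powr p * max 0 ((2/p) * (s\<^sup>2 - \<bar>s\<bar> powr p))"
    using max0_mult[of "M powr p" "(2/p) * (s\<^sup>2 - \<bar>s\<bar> powr p)"] by (simp only:) simp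
  then have "hM p M (M * s) = sqrt (M powr p) * hM p 1 s"
    unfolding hM_def by (simp add: real_sqrt_mult)
  then show ?thesis using sqrt_powr[OF M] by simp
qed

lemma HM_scale:
  assumes p: "2 < p" and M: "0 < M"
  shows "integral {0..M} (hM p M) = M powr ((p+2)/2) * integral {0..1} (hM p 1)"
proof -
  have img: "(\<lambda>x. x / M) ` {0..M} = {0..1}"
  proof
    show "(\<lambda>x. x / M) ` {0..M} \<subseteq> {0..1}" using M by (auto simp: field_simps)
    show "{0..1} \<subseteq> (\<lambda>x. x / M) ` {0..M}"
    proof
      fix y :: real assume "y \<in> {0..1}"
      then have "y = (M * y) / M" "M * y \<in> {0..M}" using M by (auto simp: mult_le_cancel_left1)
      then show "y \<in> (\<lambda>x. x / M) ` {0..M}" by blast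
    qed
  qed
  have "integral {0..1} (\<lambda>x. hM p M (M * x)) = (1 / \<bar>M\<bar>) *\<^sub>R integral {0..M} (hM p M)"
    using integral_stretch_real[of M 0 M "hM p M"] M img by simp
  moreover have "integral {0..1} (\<lambda>x. hM p M (M * x)) = M powr (p/2) * integral {0..1} (hM p 1)"
    using hM_scale[OF p M] by simp
  ultimately have "integral {0..M} (hM p M) = M * (M powr (p/2) * integral {0..1} (hM p 1))"
    using M by (simp add: field_simps)
  also have "\<dots> = M powr ((p+2)/2) * integral {0..1} (hM p 1)"
  proof -
    have "M * M powr (p/2) = M powr ((p+2)/2)"
    proof -
      have "M * M powr (p/2) = M powr 1 * M powr (p/2)" using M by simp
      also have "\<dots> = M powr (1 + p/2)" by (simp add: powr_add)
      also have "1 + p/2 = (p+2)/2" by simp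
      finally show ?thesis .
    qed
    then show ?thesis by simp
  qed
  finally show ?thesis .
qed

lemma sech_powr: "sech y powr a = cosh y powr (-a)"
  unfolding sech_def by (simp add: powr_divide powr_minus_divide)

lemma integral_pos_cont:
  fixes f :: "real \<Rightarrow> real"
  assumes "integrable lborel f" "\<And>x. 0 < f x"
  shows "0 < (LINT x|lborel. f x)"
proof -
  have nn: "0 \<le> (LINT x|lborel. f x)" using assms by (simp add: less_imp_le)
  have "(LINT x|lborel. f x) \<noteq> 0"
  proof
    assume "(LINT x|lborel. f x) = 0"
    then have "AE x in lborel. f x = 0"
      using integral_nonneg_eq_0_iff_AE[OF assms(1)] assms(2) by (simp add: less_imp_le)
    then have "AE x in (lborel::real measure). False"
      by (rule AE_mp) (use assms(2) in \<open>auto intro!: AE_I2 simp: less_le\<close>)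
    then have "ae_filter (lborel::real measure) = bot" by (simp add: trivial_limit_def)
    then show False using ae_filter_eq_bot_iff[of "lborel::real measure"] by simp
  qed
  then show ?thesis using nn by simp
qed

locale sol =
  fixes p \<mu> :: real
  assumes p2: "2 < p" and p6: "p < 6" and mu0: "0 < \<mu>"
begin

definition "al = 2 / (p - 2)"
definition "w = omega p \<mu>"
definition "k = (p - 2) / 2 * sqrt w"
definition "B = w powr (1/(p-2)) * (p/2) powr (1/(p-2))"

lemma al_pos: "0 < al" using p2 by (simp add: al_def)
lemma al_ge: "1 \<le> 2 * al" using p2 p6 by (simp add: al_def field_simps)
lemma al_p: "al * p = 2 * al + 2" using p2 by (simp add: al_def field_simps)
lemma al_p2: "al * (p - 2) = 2" using p2 by (simp add: al_def field_simps)

lemma Qp_eq: "Qp p x = (p/2) powr (1/(p-2)) * cosh ((p-2)/2 * x) powr (-al)"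
  unfolding Qp_def al_def sech_powr ..

lemma Qp_sq: "(Qp p x)\<^sup>2 = (p/2) powr (2/(p-2)) * cosh ((p-2)/2 * x) powr (-(2*al))"
proof -
  have "(Qp p x)\<^sup>2 = ((p/2) powr (1/(p-2)))\<^sup>2 * (cosh ((p-2)/2 * x) powr (-al))\<^sup>2"
    unfolding Qp_eq by (simp add: power_mult_distrib)
  also have "((p/2) powr (1/(p-2)))\<^sup>2 = (p/2) powr (2/(p-2))"
    using p2 by (simp add: power2_eq_square powr_add[symmetric])
  also have "(cosh ((p-2)/2 * x) powr (-al))\<^sup>2 = cosh ((p-2)/2 * x) powr (-(2*al))"
    by (simp add: power2_eq_square powr_add[symmetric])
  finally show ?thesis .
qed

lemma Q_int: "integrable lborel (\<lambda>x. (Qp p x)\<^sup>2)"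
  unfolding Qp_sq using integrable_cosh_powr[of "(p-2)/2" "2*al"] p2 al_ge by simp

lemma M1_pos: "0 < M1 p"
  unfolding M1_def
proof (rule integral_pos_cont[OF Q_int])
  fix x show "0 < (Qp p x)\<^sup>2" unfolding Qp_sq using p2 by simp
qed

lemma w_pos: "0 < w"
  unfolding w_def omega_def using M1_pos mu0 by simp

lemma k_pos: "0 < k"
  unfolding k_def using p2 w_pos by simp

lemma B_pos: "0 < B"
  unfolding B_def using p2 w_pos by simp

lemma B_alt: "B = (w * (p/2)) powr (1/(p-2))"
  unfolding B_def using powr_mult[of w "p/2" "1/(p-2)"] w_pos p2 by simp

lemma B_pow: "B powr (p-2) = w * p / 2"
proof -
  have "B powr (p-2) = (w * (p/2)) powr (1/(p-2) * (p-2))"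
    unfolding B_alt by (simp add: powr_powr)
  also have "\<dots> = w * p / 2" using p2 w_pos by simp
  finally show ?thesis .
qed

lemma alk: "al * k = sqrt w"
  unfolding al_def k_def using p2 by (simp add: field_simps)

lemma alk2: "(al * k)\<^sup>2 = w"
  unfolding alk using w_pos by simp

definition "f0 x = B * cosh (k * x) powr (-al)"
definition "df0 x = - (al * k * B) * (cosh (k * x) powr (-al-1) * sinh (k * x))"

lemma phi_eq: "phi p \<mu> x = f0 x"
proof -
  have e: "(p-2)/2 * (sqrt (omega p \<mu>) * x) = k * x" unfolding k_def w_def by simp
  show ?thesis
    by (simp only: phi_def Qp_eq e f0_def B_def w_def mult.assoc)
qed

lemma f0_deriv: "(f0 has_real_derivative df0 x) (at x)"
  unfolding f0_def df0_def
  by (rule derivative_eq_intros refl | simp)+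

lemma df0_cont: "continuous_on UNIV df0"
  unfolding df0_def by (intro continuous_intros) auto

end

context sol begin

abbreviation "cc x \<equiv> cosh (k * x)"

lemma cc_ge1: "1 \<le> cc x" by (simp add: cosh_real_ge_1)
lemma cc_pos: "0 < cc x" by simp

lemma f0_pos: "0 < f0 x"
  unfolding f0_def using B_pos by simp

lemma f0_le: "f0 x \<le> B"
proof -
  have "cc x powr (-al) \<le> cc x powr 0"
    using al_pos cc_ge1[of x] by (intro powr_mono) auto
  then show ?thesis unfolding f0_def using B_pos by (simp add: mult_left_le)
qed

lemma f0_zero: "f0 0 = B"
  unfolding f0_def by simp

lemma f0_sq: "(f0 x)\<^sup>2 = B\<^sup>2 * cc x powr (-(2*al))"
  unfolding f0_def by (simp add: power_mult_distrib power2_eq_square powr_add[symmetric])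

lemma Bp: "B powr p = B\<^sup>2 * (w * p / 2)"
  using powr_split2[of B p] B_pos B_pow by simp

lemma f0_p: "f0 x powr p = B\<^sup>2 * (w * p / 2) * cc x powr (-(2*al+2))"
proof -
  have "f0 x powr p = B powr p * (cc x powr (-al)) powr p"
    unfolding f0_def using B_pos by (simp add: powr_mult)
  also have "(cc x powr (-al)) powr p = cc x powr (-(2*al+2))"
    using al_p by (simp add: powr_powr)
  finally show ?thesis using Bp by simp
qed

lemma df0_sq: "(df0 x)\<^sup>2 = w * B\<^sup>2 * (cc x powr (-(2*al)) - cc x powr (-(2*al+2)))"
proof -
  have s: "(sinh (k*x))\<^sup>2 = (cc x)\<^sup>2 - 1" using cosh_square_eq[of "k*x"] by simp
  have a: "(cc x powr (-al-1))\<^sup>2 = cc x powr (-(2*al+2))"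
    by (simp add: power2_eq_square powr_add[symmetric])
  have b: "cc x powr (-(2*al+2)) * (cc x)\<^sup>2 = cc x powr (-(2*al))"
  proof -
    have e1: "cc x powr 2 = (cc x)\<^sup>2" by (simp add: powr_numeral)
    have e2: "cc x powr (-(2*al+2)) * cc x powr 2 = cc x powr (-(2*al+2) + 2)" by (rule powr_add[symmetric])
    have e3: "-(2*al+2) + 2 = -(2*al)" by simp
    note e2 = e2[unfolded e3]
    show ?thesis using e2 unfolding e1 .
  qed
  have "(df0 x)\<^sup>2 = (al * k)\<^sup>2 * B\<^sup>2 * ((cc x powr (-al-1))\<^sup>2 * (sinh (k*x))\<^sup>2)"
    unfolding df0_def by (simp add: power_mult_distrib algebra_simps)
  also have "\<dots> = w * B\<^sup>2 * (cc x powr (-(2*al+2)) * (cc x)\<^sup>2 - cc x powr (-(2*al+2)))"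
    unfolding a s alk2 by (simp add: algebra_simps)
  also have "\<dots> = w * B\<^sup>2 * (cc x powr (-(2*al)) - cc x powr (-(2*al+2)))"
    unfolding b ..
  finally show ?thesis .
qed

lemma hM_f0: "hM p B (f0 x) = \<bar>df0 x\<bar>"
proof -
  have "(hM p B (f0 x))\<^sup>2 = (2/p) * (B powr (p-2) * (f0 x)\<^sup>2 - f0 x powr p)"
    by (rule hM_sq[OF p2 less_imp_le[OF f0_pos] f0_le])
  also have "\<dots> = (df0 x)\<^sup>2"
    unfolding B_pow f0_sq f0_p df0_sq using p2 by (simp add: field_simps)
  finally have "(hM p B (f0 x))\<^sup>2 = (\<bar>df0 x\<bar>)\<^sup>2" by simp
  then show ?thesis by (metis abs_ge_zero hM_nn power2_eq_iff_nonneg)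
qed

lemma df0_nonpos: "0 \<le> x \<Longrightarrow> df0 x \<le> 0"
  unfolding df0_def using al_pos k_pos B_pos
  by (intro mult_nonpos_nonneg mult_nonneg_nonneg) (auto simp: zero_le_mult_iff)

lemma df0_nonneg: "x \<le> 0 \<Longrightarrow> 0 \<le> df0 x"
proof -
  assume "x \<le> 0"
  then have "sinh (k*x) \<le> 0" using k_pos by (simp add: mult_nonneg_nonpos)
  then show ?thesis unfolding df0_def using al_pos k_pos B_pos
    by (simp add: mult_nonpos_nonpos mult_nonneg_nonpos)
qed

lemma iJ: "integrable lborel (\<lambda>x. cc x powr (-(2*al)))"
  using integrable_cosh_powr[of k "2*al"] k_pos al_ge by simp

lemma iJ2: "integrable lborel (\<lambda>x. cc x powr (-(2*al+2)))"
  using integrable_cosh_powr[of k "2*al+2"] k_pos al_ge by simp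

definition "J = (LINT x|lborel. cc x powr (-(2*al)))"
definition "J2 = (LINT x|lborel. cc x powr (-(2*al+2)))"

lemma if0sq: "integrable lborel (\<lambda>x. (f0 x)\<^sup>2)"
  unfolding f0_sq using iJ by simp

lemma idf0sq: "integrable lborel (\<lambda>x. (df0 x)\<^sup>2)"
  unfolding df0_sq using iJ iJ2 by simp

lemma if0p: "integrable lborel (\<lambda>x. f0 x powr p)"
  unfolding f0_p using iJ2 by simp

lemma int_f0sq: "(LINT x|lborel. (f0 x)\<^sup>2) = B\<^sup>2 * J"
  unfolding f0_sq J_def by simp

lemma int_f0p: "(LINT x|lborel. f0 x powr p) = B\<^sup>2 * (w * p / 2) * J2"
  unfolding f0_p J2_def by simp

lemma int_df0sq: "(LINT x|lborel. (df0 x)\<^sup>2) = w * B\<^sup>2 * (J - J2)"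
  unfolding df0_sq J_def J2_def using iJ iJ2 by simp

end

context sol begin

lemma mass_phi: "mass (\<lambda>x. complex_of_real (phi p \<mu> x)) = \<mu>"
proof -
  have sw: "0 < sqrt w" using w_pos by simp
  have ph: "phi p \<mu> x = w powr (1/(p-2)) * Qp p (sqrt w * x)" for x
    unfolding phi_def w_def ..
  have phsq: "(phi p \<mu> x)\<^sup>2 = w powr (2/(p-2)) * (Qp p (sqrt w * x))\<^sup>2" for x
  proof -
    have "(w powr (1/(p-2)))\<^sup>2 = w powr (2/(p-2))"
      by (simp add: power2_eq_square powr_add[symmetric])
    then show ?thesis unfolding ph by (simp add: power_mult_distrib)
  qed
  have "M1 p = \<bar>sqrt w\<bar> *\<^sub>R (LINT x|lborel. (Qp p (0 + sqrt w * x))\<^sup>2)"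
    unfolding M1_def by (rule lborel_integral_real_affine) (use sw in auto)
  then have I: "(LINT x|lborel. (Qp p (sqrt w * x))\<^sup>2) = M1 p / sqrt w"
    using sw by simp
  have "mass (\<lambda>x. complex_of_real (phi p \<mu> x)) = (LINT x|lborel. (phi p \<mu> x)\<^sup>2)"
    unfolding mass_def by simp
  also have "\<dots> = w powr (2/(p-2)) * (M1 p / sqrt w)"
    unfolding phsq I[symmetric] by simp
  also have "\<dots> = w powr (2/(p-2) - 1/2) * M1 p"
    using w_pos by (simp add: powr_diff powr_half_sqrt[symmetric])
  also have "w powr (2/(p-2) - 1/2) = \<mu> / M1 p"
  proof -
    have "w powr (2/(p-2) - 1/2) = (\<mu> / M1 p) powr (2*(p-2)/(6-p) * (2/(p-2) - 1/2))"
      unfolding w_def omega_def by (simp add: powr_powr)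
    also have "2*(p-2)/(6-p) * (2/(p-2) - 1/2) = 1"
    proof -
      have "2/(p-2) - 1/2 = (6-p) / (2*(p-2))" using p2 by (simp add: field_simps)
      then show ?thesis using p2 p6 by simp
    qed
    finally show ?thesis using mu0 M1_pos by simp
  qed
  finally show ?thesis using M1_pos by simp
qed

lemma mass_f0: "\<mu> = B\<^sup>2 * J"
  using mass_phi unfolding mass_def phi_eq by (simp add: int_f0sq)

lemma cc_powr_mult1: "cc x powr a * cc x = cc x powr (a + 1)"
  by (simp add: powr_add)

lemma cc_powr_mult2: "cc x powr a * (cc x)\<^sup>2 = cc x powr (a + 2)"
proof -
  have "cc x powr a * cc x powr 2 = cc x powr (a + 2)" by (rule powr_add[symmetric])
  then show ?thesis by (simp add: powr_numeral)
qed

definition "FF x = cc x powr (-(2*al+1)) * sinh (k*x)"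
definition "dFF x = k * ((2*al+1) * cc x powr (-(2*al+2)) - 2*al * cc x powr (-(2*al)))"

lemma FF_deriv: "(FF has_real_derivative dFF x) (at x)"
proof -
  have "(FF has_real_derivative
     (-(2*al+1)) * cc x powr (-(2*al+1) - 1) * (sinh (k*x) * k) * sinh (k*x) + cc x powr (-(2*al+1)) * (cosh (k*x) * k)) (at x)"
    unfolding FF_def by (rule derivative_eq_intros refl | simp)+
  moreover have "(-(2*al+1)) * cc x powr (-(2*al+1) - 1) * (sinh (k*x) * k) * sinh (k*x) + cc x powr (-(2*al+1)) * (cosh (k*x) * k) = dFF x"
  proof -
    have s: "(sinh (k*x))\<^sup>2 = (cc x)\<^sup>2 - 1" using cosh_square_eq[of "k*x"] by simp
    have e1: "cc x powr (-(2*al+1) - 1) = cc x powr (-(2*al+2))"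
      by (rule arg_cong[where f="\<lambda>e. cc x powr e"]) simp
    have e2': "-(2*al+2) + 2 = -(2*al)" by simp
    have e2: "cc x powr (-(2*al+2)) * (cc x)\<^sup>2 = cc x powr (-(2*al))"
      using cc_powr_mult2[of x "-(2*al+2)", unfolded e2'] .
    have e3': "-(2*al+1) + 1 = -(2*al)" by simp
    have e3: "cc x powr (-(2*al+1)) * cc x = cc x powr (-(2*al))"
      using cc_powr_mult1[of x "-(2*al+1)", unfolded e3'] .
    have "(-(2*al+1)) * cc x powr (-(2*al+1) - 1) * (sinh (k*x) * k) * sinh (k*x) + cc x powr (-(2*al+1)) * (cosh (k*x) * k)
        = k * ((-(2*al+1)) * (cc x powr (-(2*al+2)) * (sinh (k*x))\<^sup>2) + cc x powr (-(2*al+1)) * cc x)"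
      unfolding e1 by (simp add: power2_eq_square algebra_simps)
    also have "\<dots> = k * ((-(2*al+1)) * (cc x powr (-(2*al+2)) * (cc x)\<^sup>2 - cc x powr (-(2*al+2))) + cc x powr (-(2*al)))"
      unfolding s e3 by (simp add: algebra_simps)
    also have "\<dots> = dFF x"
      unfolding e2 dFF_def by (simp add: algebra_simps)
    finally show ?thesis .
  qed
  ultimately show ?thesis by simp
qed

lemma J_red: "(2*al+1) * J2 = 2*al * J"
proof -
  have idFF: "integrable lborel dFF"
    unfolding dFF_def using iJ iJ2 by simp
  have "(LBINT x=-\<infinity>..\<infinity>. dFF x) = 0 - 0"
  proof (rule interval_integral_FTC_integrable)
    show "- \<infinity> < (\<infinity>::ereal)" by simp
    fix x
    show "(FF has_vector_derivative dFF x) (at x)"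
      using FF_deriv[of x] by (simp add: has_real_derivative_iff_has_vector_derivative)
    show "isCont dFF x" unfolding dFF_def by (intro continuous_intros) auto
  next
    show "set_integrable lborel (einterval (- \<infinity>) \<infinity>) dFF"
      using idFF by (simp add: set_integrable_def)
    show "((FF \<circ> real_of_ereal) \<longlongrightarrow> 0) (at_right (- \<infinity>))"
      unfolding ereal_tendsto_simps FF_def using k_pos al_pos by real_asymp
    show "((FF \<circ> real_of_ereal) \<longlongrightarrow> 0) (at_left \<infinity>)"
      unfolding ereal_tendsto_simps FF_def using k_pos al_pos by real_asymp
  qed
  then have "(LINT x|lborel. dFF x) = 0"
    by (simp add: interval_lebesgue_integral_def set_lebesgue_integral_def)
  moreover have "(LINT x|lborel. dFF x) = k * ((2*al+1) * J2 - 2*al * J)"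
    unfolding dFF_def J_def J2_def using iJ iJ2 by simp
  ultimately show ?thesis using k_pos by simp
qed

end

context sol begin

definition "HB s = integral {0..s} (hM p B)"

lemma chB: "continuous_on UNIV (hM p B)"
  by (rule hM_cont) (use p2 in auto)

lemma cHB: "continuous_on {0..B} HB"
  unfolding HB_def
  by (rule indefinite_integral_continuous_1, rule integrable_continuous_real,
      rule continuous_on_subset[OF chB]) auto

lemma HB_deriv: "0 < s \<Longrightarrow> s < B \<Longrightarrow> (HB has_real_derivative hM p B s) (at s)"
proof -
  assume s: "0 < s" "s < B"
  have "(HB has_real_derivative hM p B s) (at s within {0..B})"
    unfolding HB_def by (rule integral_has_real_derivative[OF continuous_on_subset[OF chB]]) (use s in auto)
  then show ?thesis using s by (simp add: at_within_Icc_at)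
qed

lemma HB0: "HB 0 = 0" by (simp add: HB_def)

lemma f0_lt: "x \<noteq> 0 \<Longrightarrow> f0 x < B"
proof -
  assume x: "x \<noteq> 0"
  have "1 < cc x"
  proof (cases "0 < x")
    case True
    then have "cosh 0 < cosh (k*x)" using k_pos by (subst cosh_real_nonneg_less_iff) auto
    then show ?thesis by simp
  next
    case False
    then have "k*x < 0" using x k_pos by (simp add: mult_pos_neg)
    then have "cosh 0 < cosh (k*x)" by (subst cosh_real_nonpos_less_iff) auto
    then show ?thesis by simp
  qed
  then have "cc x powr (-al) < cc x powr 0" using al_pos by (intro powr_less_mono) auto
  then show ?thesis unfolding f0_def using B_pos by simp
qed

lemma cf0: "continuous_on UNIV f0"
  using f0_deriv by (meson DERIV_continuous continuous_at_imp_continuous_on)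

lemma cHf0: "continuous_on UNIV (\<lambda>x. HB (f0 x))"
  by (rule continuous_on_compose2[OF cHB cf0]) (use f0_pos f0_le in \<open>auto simp: less_imp_le\<close>)

lemma f0_lim_top: "(f0 \<longlongrightarrow> 0) at_top"
  unfolding f0_def using k_pos al_pos by real_asymp

lemma f0_lim_bot: "(f0 \<longlongrightarrow> 0) at_bot"
  unfolding f0_def using k_pos al_pos by real_asymp

lemma HBf0_lim: "((\<lambda>x. HB (f0 x)) \<longlongrightarrow> 0) F" if "(f0 \<longlongrightarrow> 0) F"
proof -
  have "((\<lambda>x. HB (f0 x)) \<longlongrightarrow> HB 0) F"
    by (rule continuous_on_tendsto_compose[OF cHB that])
       (use B_pos f0_pos f0_le in \<open>auto simp: less_imp_le\<close>)
  then show ?thesis using HB0 by simp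
qed

lemma HBf0_deriv: "x \<noteq> 0 \<Longrightarrow> ((\<lambda>x. HB (f0 x)) has_real_derivative hM p B (f0 x) * df0 x) (at x)"
  using DERIV_chain2[OF HB_deriv[OF f0_pos f0_lt] f0_deriv] by simp

lemma df0sq_cont: "isCont (\<lambda>x. (df0 x)\<^sup>2) x"
  using df0_cont by (intro continuous_intros) (simp add: continuous_on_eq_continuous_at)

lemma right_half: "(LBINT x=0..\<infinity>. (df0 x)\<^sup>2) = HB B"
proof -
  have "(LBINT x=0..\<infinity>. (df0 x)\<^sup>2) = 0 - (- HB B)"
  proof (rule interval_integral_FTC_nonneg(2))
    show "(0::ereal) < \<infinity>" by simp
    fix x assume x: "0 < ereal x" "ereal x < \<infinity>"
    then have x0: "0 < x" by simp
    have "((\<lambda>x. - HB (f0 x)) has_real_derivative - (hM p B (f0 x) * df0 x)) (at x)"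
      by (intro DERIV_minus HBf0_deriv) (use x0 in simp)
    moreover have "- (hM p B (f0 x) * df0 x) = (df0 x)\<^sup>2"
      unfolding hM_f0 using df0_nonpos[of x] x0 by (simp add: power2_eq_square)
    ultimately show "((\<lambda>x. - HB (f0 x)) has_real_derivative (df0 x)\<^sup>2) (at x)" by simp
    show "isCont (\<lambda>x. (df0 x)\<^sup>2) x" by (rule df0sq_cont)
  next
    show "AE x in lborel. 0 < ereal x \<longrightarrow> ereal x < \<infinity> \<longrightarrow> 0 \<le> (df0 x)\<^sup>2" by simp
    have ic: "isCont (\<lambda>x. - HB (f0 x)) 0"
      using cHf0 by (intro continuous_intros) (simp add: continuous_on_eq_continuous_at)
    then have "((\<lambda>x. - HB (f0 x)) \<longlongrightarrow> - HB (f0 0)) (at_right 0)"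
      using isContD[OF ic] filterlim_at_split by blast
    then show "(((\<lambda>x. - HB (f0 x)) \<circ> real_of_ereal) \<longlongrightarrow> - HB B) (at_right 0)"
      unfolding zero_ereal_def ereal_tendsto_simps f0_zero .
    show "(((\<lambda>x. - HB (f0 x)) \<circ> real_of_ereal) \<longlongrightarrow> 0) (at_left \<infinity>)"
      unfolding ereal_tendsto_simps using tendsto_minus[OF HBf0_lim[OF f0_lim_top]] by simp
  qed
  then show ?thesis by simp
qed

lemma left_half: "(LBINT x=-\<infinity>..0. (df0 x)\<^sup>2) = HB B"
proof -
  have "(LBINT x=-\<infinity>..0. (df0 x)\<^sup>2) = HB B - 0"
  proof (rule interval_integral_FTC_nonneg(2))
    show "-\<infinity> < (0::ereal)" by simp
    fix x assume x: "-\<infinity> < ereal x" "ereal x < 0"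
    then have x0: "x < 0" by simp
    have "((\<lambda>x. HB (f0 x)) has_real_derivative hM p B (f0 x) * df0 x) (at x)"
      by (intro HBf0_deriv) (use x0 in simp)
    moreover have "hM p B (f0 x) * df0 x = (df0 x)\<^sup>2"
      unfolding hM_f0 using df0_nonneg[of x] x0 by (simp add: power2_eq_square)
    ultimately show "((\<lambda>x. HB (f0 x)) has_real_derivative (df0 x)\<^sup>2) (at x)" by simp
    show "isCont (\<lambda>x. (df0 x)\<^sup>2) x" by (rule df0sq_cont)
  next
    show "AE x in lborel. -\<infinity> < ereal x \<longrightarrow> ereal x < 0 \<longrightarrow> 0 \<le> (df0 x)\<^sup>2" by simp
    have ic: "isCont (\<lambda>x. HB (f0 x)) 0"
      using cHf0 by (simp add: continuous_on_eq_continuous_at)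
    then have "((\<lambda>x. HB (f0 x)) \<longlongrightarrow> HB (f0 0)) (at_left 0)"
      using isContD[OF ic] filterlim_at_split by blast
    then show "(((\<lambda>x. HB (f0 x)) \<circ> real_of_ereal) \<longlongrightarrow> HB B) (at_left 0)"
      unfolding zero_ereal_def ereal_tendsto_simps f0_zero .
    show "(((\<lambda>x. HB (f0 x)) \<circ> real_of_ereal) \<longlongrightarrow> 0) (at_right (-\<infinity>))"
      unfolding ereal_tendsto_simps using HBf0_lim[OF f0_lim_bot] by simp
  qed
  then show ?thesis by simp
qed

lemma K_HB: "(LINT x|lborel. (df0 x)\<^sup>2) = 2 * HB B"
proof -
  have "(LBINT x=-\<infinity>..0. (df0 x)\<^sup>2) + (LBINT x=0..\<infinity>. (df0 x)\<^sup>2) = (LBINT x=-\<infinity>..\<infinity>. (df0 x)\<^sup>2)"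
    by (rule interval_integral_sum)
       (use idf0sq in \<open>simp add: interval_lebesgue_integrable_def set_integrable_def\<close>)
  moreover have "(LBINT x=-\<infinity>..\<infinity>. (df0 x)\<^sup>2) = (LINT x|lborel. (df0 x)\<^sup>2)"
    by (simp add: interval_lebesgue_integral_def set_lebesgue_integral_def)
  ultimately show ?thesis using left_half right_half by simp
qed

end

lemma bernoulli_powr:
  fixes t q :: real
  assumes t: "0 < t" and q: "1 \<le> q"
  shows "1 + q * (t - 1) \<le> t powr q"
proof -
  have "(t powr q) powr (1/q) * 1 powr (1 - 1/q) \<le> (1/q) * t powr q + (1 - 1/q) * 1"
    using q t by (intro Youngs_inequality_0) (auto simp: field_simps)
  moreover have "(t powr q) powr (1/q) = t" using q t by (simp add: powr_powr)
  ultimately have "t \<le> (1/q) * t powr q + (1 - 1/q)" by simp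
  then have "q * t \<le> q * ((1/q) * t powr q + (1 - 1/q))" using q by simp
  also have "\<dots> = t powr q + q - 1" using q by (simp add: field_simps)
  finally show ?thesis by (simp add: algebra_simps)
qed

context sol begin

lemma phi_fun: "(\<lambda>x. complex_of_real (phi p \<mu> x)) = (\<lambda>x. complex_of_real (f0 x))"
  using phi_eq by simp

lemma phi_H1: "H1 (\<lambda>x. complex_of_real (phi p \<mu> x))"
  unfolding phi_fun by (rule smooth_H1(1)[OF f0_deriv df0_cont if0sq idf0sq])

lemma pnz: "p \<noteq> 0" "p + 2 \<noteq> 0" "p - 2 \<noteq> 0" "0 < p + 2" "0 < p - 2" "4 + p * 2 \<noteq> 0" "2 * p - 4 \<noteq> 0" "p * 2 - 4 \<noteq> 0" "2 + p \<noteq> 0"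
  using p2 by auto

lemma J2_mul: "(p+2) * J2 = 4 * J"
proof -
  have "(p-2) * ((2*al+1) * J2) = (p-2) * (2*al * J)" using J_red by simp
  moreover have "(p-2) * ((2*al+1) * J2) = (2*(al*(p-2)) + (p-2)) * J2" by (simp add: algebra_simps)
  moreover have "(p-2) * (2*al * J) = 2*(al*(p-2)) * J" by (simp add: algebra_simps)
  ultimately have "(2*2 + (p-2)) * J2 = 2*2 * J" unfolding al_p2 by simp
  then show ?thesis by (simp add: add.commute)
qed

lemma J2_val: "J2 = 4 * J / (p+2)"
  using J2_mul pnz by (simp add: field_simps)

definition "Z = w * \<mu> / (p+2)"

lemma Zp: "Z * (p+2) = w * \<mu>"
  unfolding Z_def using pnz by simp

lemma muBJ: "B\<^sup>2 * J = \<mu>" using mass_f0 by simp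

lemma K0_eq: "(LINT x|lborel. (df0 x)\<^sup>2) = w * \<mu> - 4 * Z"
proof -
  have "(LINT x|lborel. (df0 x)\<^sup>2) = w * (B\<^sup>2 * J) - 4 * (w * (B\<^sup>2 * J) / (p+2))"
    unfolding int_df0sq J2_val by (simp add: algebra_simps)
  then show ?thesis unfolding muBJ Z_def .
qed

lemma P0_eq: "(LINT x|lborel. f0 x powr p) = 2 * p * Z"
proof -
  have "(LINT x|lborel. f0 x powr p) = 2 * p * (w * (B\<^sup>2 * J) / (p+2))"
    unfolding int_f0p J2_val using pnz by (simp add: field_simps)
  then show ?thesis unfolding muBJ Z_def .
qed

lemma E0_phi: "E0 p (\<lambda>x. complex_of_real (phi p \<mu> x)) = w * \<mu> / 2 - 4 * Z"
proof -
  have "E0 p (\<lambda>x. complex_of_real (f0 x)) = (1/2) * (w * \<mu> - 4 * Z) - (1/p) * (2 * p * Z)"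
    unfolding E0_def smooth_H1(2)[OF f0_deriv df0_cont if0sq idf0sq] K0_eq
    using f0_pos P0_eq by (simp add: less_imp_le)
  also have "\<dots> = w * \<mu> / 2 - 4 * Z"
    using pnz by (simp add: algebra_simps)
  finally show ?thesis unfolding phi_fun .
qed

lemma HB_K0: "2 * HB B = w * \<mu> - 4 * Z"
  using K_HB K0_eq by simp

lemma G_ineq:
  assumes t: "0 < t"
  shows "w * \<mu> / 2 - 4 * Z \<le> t powr ((p+2)/2) * (w * \<mu> - 4 * Z) - t powr (p-2) * (w * \<mu> / 2)"
proof -
  define q where "q = ((p+2) / 2) / (p-2)"
  define X where "X = w * \<mu>"
  define K where "K = X - 4 * Z"
  have q1: "1 \<le> q" unfolding q_def using p2 p6 by (simp add: field_simps)
  have X0: "0 < X" unfolding X_def using w_pos mu0 by simp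
  have pq: "(p-2) * q = (p+2)/2" unfolding q_def using pnz by (simp add: field_simps)
  have tq: "(t powr (p-2)) powr q = t powr ((p+2)/2)"
    unfolding powr_powr pq ..
  have b: "1 + q * (t powr (p-2) - 1) \<le> t powr ((p+2)/2)"
    using bernoulli_powr[of "t powr (p-2)" q] t q1 tq by simp
  have Kp: "K * (p+2) = X * (p-2)"
  proof -
    have "K * (p+2) = X * (p+2) - 4 * (Z * (p+2))" unfolding K_def by (simp add: algebra_simps)
    also have "\<dots> = X * (p-2)" unfolding Zp X_def by (simp add: algebra_simps)
    finally show ?thesis .
  qed
  have Kq: "K * q = X / 2"
  proof -
    have "(2 * (p-2)) * (K * q) = K * (2 * ((p-2) * q))" by (simp add: algebra_simps)
    also have "\<dots> = K * (p+2)" unfolding pq by simp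
    also have "\<dots> = (2 * (p-2)) * (X / 2)" unfolding Kp by simp
    finally show ?thesis using pnz by simp
  qed
  have K0pos: "0 \<le> K"
  proof -
    have "0 \<le> X * (p-2)" using X0 pnz by simp
    then have "0 \<le> K * (p+2)" unfolding Kp .
    then show ?thesis using pnz by (simp add: zero_le_mult_iff)
  qed
  have "K * (1 + q * (t powr (p-2) - 1)) \<le> K * t powr ((p+2)/2)"
    by (rule mult_left_mono[OF b K0pos])
  moreover have "K * (1 + q * (t powr (p-2) - 1)) = K + (K * q) * t powr (p-2) - K * q"
    by (simp add: algebra_simps)
  ultimately have "K + (X/2) * t powr (p-2) - X/2 \<le> K * t powr ((p+2)/2)"
    unfolding Kq by simp
  then have "X/2 - 4 * Z \<le> t powr ((p+2)/2) * K - t powr (p-2) * (X / 2)"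
    unfolding K_def by (simp add: algebra_simps)
  then show ?thesis unfolding X_def K_def .
qed

lemma lower_bound:
  assumes H: "H1 u" and m: "mass u = \<mu>"
  shows "\<exists>M>0. (\<forall>x. cmod (u x) \<le> M)
     \<and> integrable lborel (\<lambda>x. (cmod (dH1 u x) - hM p M (cmod (u x)))\<^sup>2)
     \<and> E0 p (\<lambda>x. complex_of_real (phi p \<mu> x)) + (1/2) * (LINT x|lborel. (cmod (dH1 u x) - hM p M (cmod (u x)))\<^sup>2) \<le> E0 p u"
proof -
  obtain C where C: "\<And>x. cmod (u x) \<le> C" using H1_bounded[OF H] by blast
  define M where "M = Sup (range (\<lambda>x. cmod (u x)))"
  have bdd: "bdd_above (range (\<lambda>x. cmod (u x)))" using C by (intro bdd_aboveI[of _ C]) auto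
  have Mb: "\<And>x. cmod (u x) \<le> M" unfolding M_def using bdd by (auto intro: cSup_upper)
  have Msup: "\<exists>x. M - e < cmod (u x)" if "0 < e" for e
  proof -
    have "M - e < M" using that by simp
    then show ?thesis unfolding M_def using bdd by (subst (asm) less_cSup_iff) auto
  qed
  have M0: "0 < M"
  proof (rule ccontr)
    assume "\<not> 0 < M"
    then have "\<And>x. cmod (u x) = 0" using Mb by (meson norm_ge_zero order.trans antisym not_less)
    then have "mass u = 0" unfolding mass_def by simp
    then show False using m mu0 by simp
  qed
  note cal = calib[OF p2 H Mb Msup]
  define D where "D = (LINT x|lborel. (cmod (dH1 u x) - hM p M (cmod (u x)))\<^sup>2)"
  define t where "t = M / B"
  have t0: "0 < t" unfolding t_def using M0 B_pos by simp
  have Mt: "M = t * B" unfolding t_def using B_pos by simp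
  have "integral {0..M} (hM p M) = t powr ((p+2)/2) * HB B"
  proof -
    have e1: "integral {0..M} (hM p M) = M powr ((p+2)/2) * integral {0..1} (hM p 1)"
      by (rule HM_scale[OF p2 M0])
    have e2: "M powr ((p+2)/2) = t powr ((p+2)/2) * B powr ((p+2)/2)"
      unfolding Mt using t0 B_pos by (simp add: powr_mult)
    have e3: "B powr ((p+2)/2) * integral {0..1} (hM p 1) = HB B"
      unfolding HB_def by (rule HM_scale[OF p2 B_pos, symmetric])
    show ?thesis unfolding e1 e2 mult.assoc e3 ..
  qed
  then have a1: "2 * integral {0..M} (hM p M) = t powr ((p+2)/2) * (w * \<mu> - 4 * Z)"
    using HB_K0 by simp
  have "M powr (p-2) = t powr (p-2) * (w * p / 2)"
    unfolding Mt using t0 B_pos B_pow by (simp add: powr_mult)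
  then have a2: "(1/p) * (M powr (p-2) * mass u) = t powr (p-2) * (w * \<mu> / 2)"
    using m pnz by (simp add: field_simps)
  have "t powr ((p+2)/2) * (w * \<mu> - 4 * Z) - t powr (p-2) * (w * \<mu> / 2) + (1/2) * D \<le> E0 p u"
    using cal(2) a1 a2 unfolding D_def by linarith
  then have "w * \<mu> / 2 - 4 * Z + (1/2) * D \<le> E0 p u"
    using G_ineq[OF t0] by linarith
  then show ?thesis unfolding E0_phi D_def using M0 Mb cal(1) by blast
qed

end

lemma incr_bound:
  assumes wd: "weak_deriv_L2 u w" and ab: "a \<le> b"
    and ae: "AE t in lborel. t \<in> {a..b} \<longrightarrow> cmod (w t) \<le> c"
  shows "cmod (u b - u a) \<le> c * (b - a)"
proof -
  have si: "set_integrable lborel {a..b} w" and e: "u b - u a = (LINT x:{a..b}|lborel. w x)"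
    using wd ab unfolding weak_deriv_L2_def by auto
  have "cmod (u b - u a) \<le> (LINT t:{a..b}|lborel. cmod (w t))"
    unfolding e by (rule set_integral_norm_bound[OF si])
  also have "\<dots> \<le> (LINT t:{a..b}|lborel. c)"
  proof (rule set_integral_mono_AE)
    show "set_integrable lborel {a..b} (\<lambda>t. cmod (w t))" by (rule set_integrable_norm[OF si])
    show "set_integrable lborel {a..b} (\<lambda>t. c)"
      by (rule borel_integrable_atLeastAtMost') (rule continuous_on_const)
    show "AE t\<in>{a..b} in lborel. cmod (w t) \<le> c" using ae by simp
  qed
  also have "\<dots> = c * (b - a)"
    using ab by (simp add: set_integral_const emeasure_lborel_Icc measure_lborel_Icc)
  finally show ?thesis .
qed

lemma zero_near:
  fixes u w :: "real \<Rightarrow> complex" and h :: "real \<Rightarrow> real"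
  assumes wd: "weak_deriv_L2 u w" and Mb: "\<And>x. cmod (u x) \<le> M"
    and hb: "\<And>s. 0 \<le> s \<Longrightarrow> s \<le> M \<Longrightarrow> h s \<le> L * s" and L: "0 \<le> L"
    and ae: "AE x in lborel. cmod (w x) = h (cmod (u x))"
    and uz: "u z = 0" and d: "0 < d" and Ld: "L * d \<le> 1/2"
  shows "\<And>x. x \<in> {z-d..z+d} \<Longrightarrow> u x = 0"
proof -
  define S where "S = (\<lambda>t. cmod (u t)) ` {z-d..z+d}"
  define m where "m = Sup S"
  have Sne: "S \<noteq> {}" unfolding S_def using d by auto
  have Sbdd: "bdd_above S" unfolding S_def using Mb by (auto intro!: bdd_aboveI[of _ M])
  have um: "cmod (u t) \<le> m" if "t \<in> {z-d..z+d}" for t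
    unfolding m_def S_def using that Sbdd[unfolded S_def] by (auto intro!: cSup_upper)
  have "cmod (u z) \<le> m" using um d by auto
  then have m0: "0 \<le> m" by (meson norm_ge_zero order_trans)
  have aeb: "AE t in lborel. t \<in> {z-d..z+d} \<longrightarrow> cmod (w t) \<le> L * m"
    using ae
  proof (rule AE_mp, intro AE_I2 impI)
    fix t assume e: "cmod (w t) = h (cmod (u t))" and t: "t \<in> {z-d..z+d}"
    have "h (cmod (u t)) \<le> L * cmod (u t)" using hb[OF norm_ge_zero Mb] .
    also have "\<dots> \<le> L * m" using um[OF t] L by (rule mult_left_mono)
    finally show "cmod (w t) \<le> L * m" using e by simp
  qed
  have Lmd: "L * m * d \<le> m / 2"
  proof -
    have "m * (L * d) \<le> m * (1/2)" by (rule mult_left_mono[OF Ld m0])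
    then show ?thesis by (simp add: algebra_simps)
  qed
  have half: "cmod (u x) \<le> m / 2" if x: "x \<in> {z-d..z+d}" for x
  proof (cases "z \<le> x")
    case True
    have "cmod (u x - u z) \<le> L * m * (x - z)"
      by (rule incr_bound[OF wd True]) (rule AE_mp[OF aeb], use x in auto)
    also have "\<dots> \<le> L * m * d" using x m0 L by (intro mult_left_mono) auto
    also have "\<dots> \<le> m / 2" by (rule Lmd)
    finally show ?thesis using uz by simp
  next
    case False
    then have xz: "x \<le> z" by simp
    have "cmod (u z - u x) \<le> L * m * (z - x)"
      by (rule incr_bound[OF wd xz]) (rule AE_mp[OF aeb], use x in auto)
    also have "\<dots> \<le> L * m * d" using x m0 L by (intro mult_left_mono) auto
    also have "\<dots> \<le> m / 2" by (rule Lmd)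
    finally show ?thesis using uz by (simp add: norm_minus_commute)
  qed
  have "m \<le> m / 2" unfolding m_def
  proof (rule cSup_least[OF Sne])
    fix y assume "y \<in> S"
    then show "y \<le> Sup S / 2" unfolding S_def using half unfolding m_def S_def by auto
  qed
  then have "m \<le> 0" by simp
  fix x assume "x \<in> {z-d..z+d}"
  then have "cmod (u x) \<le> 0" using um \<open>m \<le> 0\<close> by (meson order_trans)
  then show "u x = 0" by simp
qed

lemma zero_all:
  fixes u w :: "real \<Rightarrow> complex" and h :: "real \<Rightarrow> real"
  assumes wd: "weak_deriv_L2 u w" and Mb: "\<And>x. cmod (u x) \<le> M"
    and hb: "\<And>s. 0 \<le> s \<Longrightarrow> s \<le> M \<Longrightarrow> h s \<le> L * s" and L: "0 \<le> L"
    and ae: "AE x in lborel. cmod (w x) = h (cmod (u x))"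
    and uz: "u z = 0"
  shows "u x = 0"
proof -
  define d where "d = 1 / (2 * L + 2)"
  have d: "0 < d" unfolding d_def using L by simp
  have Ld: "L * d \<le> 1/2" unfolding d_def using L by (simp add: field_simps)
  have ind: "\<forall>y\<in>{z - real n * d..z + real n * d}. u y = 0" for n :: nat
  proof (induction n)
    case 0 then show ?case using uz by simp
  next
    case (Suc n)
    show ?case
    proof
      fix y assume y: "y \<in> {z - real (Suc n) * d..z + real (Suc n) * d}"
      show "u y = 0"
      proof (cases "y \<in> {z - real n * d..z + real n * d}")
        case True then show ?thesis using Suc by blast
      next
        case False
        show ?thesis
        proof (cases "z + real n * d < y")
          case True
          have "u (z + real n * d) = 0" using Suc d by auto
          from zero_near[OF wd Mb hb L ae this d Ld] show ?thesis
            using y True by (auto simp: algebra_simps)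
        next
          case False
          then have "y < z - real n * d" using \<open>y \<notin> _\<close> y by auto
          have "u (z - real n * d) = 0" using Suc d by auto
          from zero_near[OF wd Mb hb L ae this d Ld] show ?thesis
            using y \<open>y < z - real n * d\<close> by (auto simp: algebra_simps)
        qed
      qed
    qed
  qed
  obtain n :: nat where n: "\<bar>x - z\<bar> / d \<le> real n" using real_arch_simple by blast
  then have "\<bar>x - z\<bar> \<le> real n * d" using d by (simp add: field_simps)
  then have "x \<in> {z - real n * d..z + real n * d}" by auto
  then show ?thesis using ind by blast
qed

lemma Inf_eq_lim:
  fixes S :: "real set" and a :: "nat \<Rightarrow> real"
  assumes lb: "\<And>s. s \<in> S \<Longrightarrow> c \<le> s" and aS: "\<And>n. a n \<in> S" and lim: "a \<longlonglongrightarrow> c"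
  shows "Inf S = c"
proof (rule cInf_eq_non_empty)
  show "S \<noteq> {}" using aS by blast
  show "\<And>x. x \<in> S \<Longrightarrow> c \<le> x" by (rule lb)
  fix y assume y: "\<And>x. x \<in> S \<Longrightarrow> y \<le> x"
  show "y \<le> c" by (rule LIMSEQ_le_const[OF lim]) (use y aS in blast)
qed

lemma V_bounded:
  fixes V :: "real \<Rightarrow> real"
  assumes cV: "continuous_on UNIV V" and lim: "(V \<longlongrightarrow> 0) at_infinity"
  shows "\<exists>C. \<forall>x. \<bar>V x\<bar> \<le> C"
proof -
  have "eventually (\<lambda>x. dist (V x) 0 < 1) at_infinity"
    using lim by (rule tendstoD) simp
  then obtain b where b: "\<And>x. b \<le> norm x \<Longrightarrow> dist (V x) 0 < 1"
    unfolding eventually_at_infinity by blast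
  have "compact (V ` {-b..b})"
    by (rule compact_continuous_image[OF continuous_on_subset[OF cV]]) auto
  then obtain C1 where C1: "\<And>y. y \<in> V ` {-b..b} \<Longrightarrow> norm y \<le> C1"
    using compact_imp_bounded bounded_iff by metis
  have "\<bar>V x\<bar> \<le> max C1 1" for x
  proof (cases "b \<le> norm x")
    case True then show ?thesis using b[of x] by simp
  next
    case False then have "x \<in> {-b..b}" by auto
    then show ?thesis using C1[of "V x"] by force
  qed
  then show ?thesis by blast
qed

context sol begin

definition "tr y x = f0 (x - y)"

lemma tr_deriv: "((tr y) has_real_derivative df0 (x - y)) (at x)"
proof -
  have d: "((\<lambda>x. x - y) has_real_derivative 1) (at x)"
    by (rule derivative_eq_intros refl | simp)+
  show ?thesis unfolding tr_def using DERIV_chain2[OF f0_deriv d] by simp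
qed

lemma tr_dcont: "continuous_on UNIV (\<lambda>x. df0 (x - y))"
  by (rule continuous_on_compose2[OF df0_cont]) (auto intro!: continuous_intros)

lemma shift_integrable: "integrable lborel f \<Longrightarrow> integrable lborel (\<lambda>x. f (x - y))"
  for f :: "real \<Rightarrow> real"
  using lborel_integrable_real_affine[of f 1 "-y"] by simp

lemma shift_integral: "(LINT x|lborel. f (x - y)) = (LINT x|lborel. f x)"
  for f :: "real \<Rightarrow> real"
  using lborel_integral_real_affine[of 1 f "-y"] by simp

lemma tr_H1: "H1 (\<lambda>x. complex_of_real (tr y x))"
  and tr_dH1: "(LINT x|lborel. (cmod (dH1 (\<lambda>x. complex_of_real (tr y x)) x))\<^sup>2) = (LINT x|lborel. (df0 x)\<^sup>2)"
proof -
  have i1: "integrable lborel (\<lambda>x. (tr y x)\<^sup>2)"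
    unfolding tr_def using shift_integrable[OF if0sq] .
  have i2: "integrable lborel (\<lambda>x. (df0 (x - y))\<^sup>2)"
    using shift_integrable[OF idf0sq] .
  show "H1 (\<lambda>x. complex_of_real (tr y x))"
    by (rule smooth_H1(1)[OF tr_deriv tr_dcont i1 i2])
  show "(LINT x|lborel. (cmod (dH1 (\<lambda>x. complex_of_real (tr y x)) x))\<^sup>2) = (LINT x|lborel. (df0 x)\<^sup>2)"
    using smooth_H1(2)[OF tr_deriv tr_dcont i1 i2] shift_integral[of "\<lambda>x. (df0 x)\<^sup>2"] by simp
qed

lemma tr_mass: "mass (\<lambda>x. complex_of_real (tr y x)) = \<mu>"
proof -
  have "mass (\<lambda>x. complex_of_real (tr y x)) = (LINT x|lborel. (f0 (x - y))\<^sup>2)"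
    unfolding mass_def tr_def by simp
  also have "\<dots> = (LINT x|lborel. (f0 x)\<^sup>2)" by (rule shift_integral)
  also have "\<dots> = \<mu>" using mass_phi unfolding phi_fun mass_def by simp
  finally show ?thesis .
qed

lemma tr_E0: "E0 p (\<lambda>x. complex_of_real (tr y x)) = E0 p (\<lambda>x. complex_of_real (phi p \<mu> x))"
proof -
  have a: "(LINT x|lborel. (cmod (complex_of_real (tr y x))) powr p) = (LINT x|lborel. f0 x powr p)"
  proof -
    have "(LINT x|lborel. (cmod (complex_of_real (tr y x))) powr p) = (LINT x|lborel. f0 (x - y) powr p)"
      unfolding tr_def using f0_pos by (simp add: less_imp_le)
    also have "\<dots> = (LINT x|lborel. f0 x powr p)" by (rule shift_integral)
    finally show ?thesis .
  qed
  have b: "(LINT x|lborel. (cmod (complex_of_real (f0 x))) powr p) = (LINT x|lborel. f0 x powr p)"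
    using f0_pos by (simp add: less_imp_le)
  show ?thesis unfolding phi_fun E0_def tr_dH1 a b smooth_H1(2)[OF f0_deriv df0_cont if0sq idf0sq] ..
qed

end

context sol begin

lemma E0_phi_le: "H1 u \<Longrightarrow> mass u = \<mu> \<Longrightarrow> E0 p (\<lambda>x. complex_of_real (phi p \<mu> x)) \<le> E0 p u"
proof -
  assume H: "H1 u" and m: "mass u = \<mu>"
  from lower_bound[OF H m] obtain M where
    M: "E0 p (\<lambda>x. complex_of_real (phi p \<mu> x)) + (1/2) * (LINT x|lborel. (cmod (dH1 u x) - hM p M (cmod (u x)))\<^sup>2) \<le> E0 p u"
    by blast
  moreover have "0 \<le> (LINT x|lborel. (cmod (dH1 u x) - hM p M (cmod (u x)))\<^sup>2)" by simp
  ultimately show ?thesis by linarith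
qed

lemma u_zero_if:
  assumes H: "H1 u" and m: "mass u = \<mu>"
    and E: "E0 p u \<le> E0 p (\<lambda>x. complex_of_real (phi p \<mu> x))"
    and z: "u z = 0"
  shows False
proof -
  from lower_bound[OF H m] obtain M where M0: "0 < M" and Mb: "\<And>x. cmod (u x) \<le> M"
    and iD: "integrable lborel (\<lambda>x. (cmod (dH1 u x) - hM p M (cmod (u x)))\<^sup>2)"
    and lb: "E0 p (\<lambda>x. complex_of_real (phi p \<mu> x)) + (1/2) * (LINT x|lborel. (cmod (dH1 u x) - hM p M (cmod (u x)))\<^sup>2) \<le> E0 p u"
    by blast
  have "(LINT x|lborel. (cmod (dH1 u x) - hM p M (cmod (u x)))\<^sup>2) = 0"
  proof -
    have "0 \<le> (LINT x|lborel. (cmod (dH1 u x) - hM p M (cmod (u x)))\<^sup>2)" by simp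
    then show ?thesis using lb E by linarith
  qed
  then have "AE x in lborel. (cmod (dH1 u x) - hM p M (cmod (u x)))\<^sup>2 = 0"
    using integral_nonneg_eq_0_iff_AE[OF iD] by simp
  then have ae: "AE x in lborel. cmod (dH1 u x) = hM p M (cmod (u x))"
    by (rule AE_mp) (auto intro!: AE_I2)
  have hb: "\<And>s. 0 \<le> s \<Longrightarrow> s \<le> M \<Longrightarrow> hM p M s \<le> sqrt ((2/p) * M powr (p-2)) * s"
    using hM_le[OF p2] by blast
  have L0: "0 \<le> sqrt ((2/p) * M powr (p-2))"
    by (rule real_sqrt_ge_zero) (use p2 in simp)
  have "u x = 0" for x
    using zero_all[OF H1_dH1[OF H] Mb hb L0 ae z] by blast
  then have "mass u = 0" unfolding mass_def by simp
  then show False using m mu0 by simp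
qed

lemma int_pos_at:
  fixes f :: "real \<Rightarrow> real"
  assumes i: "integrable lborel f" and nn: "\<And>x. 0 \<le> f x" and c: "isCont f x1" and pos: "0 < f x1"
  shows "0 < (LINT x|lborel. f x)"
proof -
  obtain d where d: "d > 0" "\<And>x. dist x x1 < d \<Longrightarrow> dist (f x) (f x1) < f x1 / 2"
    using c pos unfolding continuous_at_eps_delta by (metis half_gt_zero)
  have "f x1 / 2 * ((x1 + d/2) - (x1 - d/2)) \<le> (LINT x|lborel. f x)"
  proof (rule int_lower[OF i nn])
    fix x assume "x \<in> {x1 - d/2..x1 + d/2}"
    then have "dist x x1 < d" using d by (auto simp: dist_real_def)
    then have "\<bar>f x - f x1\<bar> < f x1 / 2" using d(2) by (simp add: dist_real_def)
    then show "f x1 / 2 \<le> f x" by linarith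
  qed (use d in auto)
  moreover have "0 < f x1 / 2 * ((x1 + d/2) - (x1 - d/2))" using d pos by simp
  ultimately show ?thesis by linarith
qed

theorem main_V:
  fixes V :: "real \<Rightarrow> real"
  assumes cV: "continuous_on UNIV V" and Vnn: "\<forall>x. 0 \<le> V x" and Vne: "\<exists>x. V x \<noteq> 0"
    and Vlim: "(V \<longlongrightarrow> 0) at_infinity"
  shows "Inf {EV p V u | u. H1 u \<and> mass u = \<mu>} = E0 p (\<lambda>x. complex_of_real (phi p \<mu> x))"
    and "\<not> (\<exists>u. H1 u \<and> mass u = \<mu> \<and> EV p V u = E0 p (\<lambda>x. complex_of_real (phi p \<mu> x)))"
proof -
  obtain C where C: "\<And>x. \<bar>V x\<bar> \<le> C" using V_bounded[OF cV Vlim] by blast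
  have mV[measurable]: "V \<in> borel_measurable borel" using cV by (rule borel_measurable_continuous_onI)
  have iV: "integrable lborel (\<lambda>x. V x * (cmod (u x))\<^sup>2)" if H: "H1 u" for u
  proof (rule Bochner_Integration.integrable_bound)
    have mu[measurable]: "u \<in> borel_measurable borel" using H1_meas[OF H] by simp
    show "integrable lborel (\<lambda>x. C * (cmod (u x))\<^sup>2)" using H unfolding H1_def by simp
    show "(\<lambda>x. V x * (cmod (u x))\<^sup>2) \<in> borel_measurable lborel" by measurable
    show "AE x in lborel. norm (V x * (cmod (u x))\<^sup>2) \<le> norm (C * (cmod (u x))\<^sup>2)"
    proof (intro AE_I2)
      fix x
      have "\<bar>V x\<bar> * (cmod (u x))\<^sup>2 \<le> C * (cmod (u x))\<^sup>2" using C[of x] by (intro mult_right_mono) auto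
      then show "norm (V x * (cmod (u x))\<^sup>2) \<le> norm (C * (cmod (u x))\<^sup>2)"
        using C[of x] by (simp add: abs_mult)
    qed
  qed
  have Ige: "0 \<le> (LINT x|lborel. V x * (cmod (u x))\<^sup>2)" for u
    using Vnn by (intro integral_nonneg_AE) auto
  define E where "E = E0 p (\<lambda>x. complex_of_real (phi p \<mu> x))"
  show "Inf {EV p V u | u. H1 u \<and> mass u = \<mu>} = E0 p (\<lambda>x. complex_of_real (phi p \<mu> x))"
  proof (rule Inf_eq_lim)
    fix s assume "s \<in> {EV p V u | u. H1 u \<and> mass u = \<mu>}"
    then obtain u where u: "H1 u" "mass u = \<mu>" "s = EV p V u" by blast
    then show "E0 p (\<lambda>x. complex_of_real (phi p \<mu> x)) \<le> s"
      using E0_phi_le[OF u(1,2)] Ige[of u] unfolding EV_def by simp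
  next
    fix n :: nat
    show "EV p V (\<lambda>x. complex_of_real (tr (real n) x)) \<in> {EV p V u | u. H1 u \<and> mass u = \<mu>}"
      using tr_H1 tr_mass by blast
  next
    have lim0: "(\<lambda>n. LINT x|lborel. V x * (cmod (complex_of_real (tr (real n) x)))\<^sup>2) \<longlonglongrightarrow> 0"
    proof -
      have eq: "(LINT x|lborel. V x * (cmod (complex_of_real (tr (real n) x)))\<^sup>2)
              = (LINT x|lborel. V (real n + x) * (f0 x)\<^sup>2)" for n
      proof -
        have "(LINT x|lborel. V x * (cmod (complex_of_real (tr (real n) x)))\<^sup>2)
            = (LINT x|lborel. V x * (f0 (x - real n))\<^sup>2)"
          unfolding tr_def by simp
        also have "\<dots> = \<bar>1\<bar> *\<^sub>R (LINT x|lborel. V (real n + 1 * x) * (f0 ((real n + 1 * x) - real n))\<^sup>2)"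
          by (rule lborel_integral_real_affine) simp
        also have "\<dots> = (LINT x|lborel. V (real n + x) * (f0 x)\<^sup>2)" by simp
        finally show ?thesis .
      qed
      have mf0[measurable]: "f0 \<in> borel_measurable borel"
        using cf0 by (rule borel_measurable_continuous_onI)
      have "(\<lambda>n. LINT x|lborel. V (real n + x) * (f0 x)\<^sup>2) \<longlonglongrightarrow> (LINT (x::real)|lborel. (0::real))"
      proof (rule integral_dominated_convergence[where w="\<lambda>x. C * (f0 x)\<^sup>2" and s="\<lambda>i x. V (real i + x) * (f0 x)\<^sup>2" and f="\<lambda>x. 0"])
        show "(\<lambda>x. 0::real) \<in> borel_measurable lborel" by simp
        show "(\<lambda>x. V (real i + x) * (f0 x)\<^sup>2) \<in> borel_measurable lborel" for i by measurable
        show "integrable lborel (\<lambda>x. C * (f0 x)\<^sup>2)" using if0sq by simp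
        show "AE x in lborel. (\<lambda>i. V (real i + x) * (f0 x)\<^sup>2) \<longlonglongrightarrow> 0"
        proof (intro AE_I2)
          fix x
          have "filterlim (\<lambda>i. x + real i) at_top sequentially"
            by (rule filterlim_tendsto_add_at_top[OF tendsto_const filterlim_real_sequentially])
          then have "filterlim (\<lambda>i. real i + x) at_infinity sequentially"
            by (simp add: add.commute filterlim_at_top_imp_at_infinity)
          then have "(\<lambda>i. V (real i + x)) \<longlonglongrightarrow> 0" by (rule filterlim_compose[OF Vlim])
          then show "(\<lambda>i. V (real i + x) * (f0 x)\<^sup>2) \<longlonglongrightarrow> 0"
            by (rule tendsto_mult_left_zero)
        qed
        show "AE x in lborel. norm (V (real i + x) * (f0 x)\<^sup>2) \<le> C * (f0 x)\<^sup>2" for i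
        proof (intro AE_I2)
          fix x
          show "norm (V (real i + x) * (f0 x)\<^sup>2) \<le> C * (f0 x)\<^sup>2"
            using C[of "real i + x"] by (simp add: abs_mult mult_right_mono)
        qed
      qed
      then show ?thesis unfolding eq by simp
    qed
    have "(\<lambda>n. E0 p (\<lambda>x. complex_of_real (phi p \<mu> x)) + 1/2 * (LINT x|lborel. V x * (cmod (complex_of_real (tr (real n) x)))\<^sup>2))
        \<longlonglongrightarrow> E0 p (\<lambda>x. complex_of_real (phi p \<mu> x)) + 1/2 * 0"
      by (intro tendsto_intros lim0)
    then show "(\<lambda>n. EV p V (\<lambda>x. complex_of_real (tr (real n) x))) \<longlonglongrightarrow> E0 p (\<lambda>x. complex_of_real (phi p \<mu> x))"
      unfolding EV_def tr_E0 by simp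
  qed
  show "\<not> (\<exists>u. H1 u \<and> mass u = \<mu> \<and> EV p V u = E0 p (\<lambda>x. complex_of_real (phi p \<mu> x)))"
  proof
    assume "\<exists>u. H1 u \<and> mass u = \<mu> \<and> EV p V u = E0 p (\<lambda>x. complex_of_real (phi p \<mu> x))"
    then obtain u where H: "H1 u" and m: "mass u = \<mu>" and e: "EV p V u = E" unfolding E_def by blast
    have le: "E \<le> E0 p u" unfolding E_def by (rule E0_phi_le[OF H m])
    have I0: "(LINT x|lborel. V x * (cmod (u x))\<^sup>2) = 0"
      using e le Ige[of u] unfolding EV_def by linarith
    have E0le: "E0 p u \<le> E" using e Ige[of u] unfolding EV_def by linarith
    obtain x1 where x1: "V x1 \<noteq> 0" using Vne by blast
    have "u x1 = 0"
    proof (rule ccontr)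
      assume "u x1 \<noteq> 0"
      have "0 < (LINT x|lborel. V x * (cmod (u x))\<^sup>2)"
      proof (rule int_pos_at[OF iV[OF H]])
        show "\<And>x. 0 \<le> V x * (cmod (u x))\<^sup>2" using Vnn by simp
        have "continuous_on UNIV (\<lambda>x. V x * (cmod (u x))\<^sup>2)"
          using H1_cont[OF H] cV by (intro continuous_intros)
        then show "isCont (\<lambda>x. V x * (cmod (u x))\<^sup>2) x1"
          by (simp add: continuous_on_eq_continuous_at)
        show "0 < V x1 * (cmod (u x1))\<^sup>2"
          using x1 Vnn \<open>u x1 \<noteq> 0\<close> by (simp add: less_le)
      qed
      then show False using I0 by simp
    qed
    then show False using u_zero_if[OF H m] E0le unfolding E_def by blast
  qed
qed

theorem main_g:
  assumes g: "0 < g"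
  shows "Inf {Eg p g u | u. H1 u \<and> mass u = \<mu>} = E0 p (\<lambda>x. complex_of_real (phi p \<mu> x))"
    and "\<not> (\<exists>u. H1 u \<and> mass u = \<mu> \<and> Eg p g u = E0 p (\<lambda>x. complex_of_real (phi p \<mu> x)))"
proof -
  show "Inf {Eg p g u | u. H1 u \<and> mass u = \<mu>} = E0 p (\<lambda>x. complex_of_real (phi p \<mu> x))"
  proof (rule Inf_eq_lim)
    fix s assume "s \<in> {Eg p g u | u. H1 u \<and> mass u = \<mu>}"
    then obtain u where u: "H1 u" "mass u = \<mu>" "s = Eg p g u" by blast
    then show "E0 p (\<lambda>x. complex_of_real (phi p \<mu> x)) \<le> s"
    proof -
      have "0 \<le> g/2 * (cmod (u 0))\<^sup>2" using g by simp
      then show ?thesis using E0_phi_le[OF u(1,2)] u(3) unfolding Eg_def by linarith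
    qed
  next
    fix n :: nat
    show "Eg p g (\<lambda>x. complex_of_real (tr (real n) x)) \<in> {Eg p g u | u. H1 u \<and> mass u = \<mu>}"
      using tr_H1 tr_mass by blast
  next
    have "filterlim (\<lambda>n. - real n) at_bot sequentially"
      by (simp add: filterlim_uminus_at_bot filterlim_real_sequentially)
    then have "(\<lambda>n. f0 (- real n)) \<longlonglongrightarrow> 0" by (rule filterlim_compose[OF f0_lim_bot])
    then have "(\<lambda>n. E0 p (\<lambda>x. complex_of_real (phi p \<mu> x)) + g/2 * (f0 (- real n))\<^sup>2)
        \<longlonglongrightarrow> E0 p (\<lambda>x. complex_of_real (phi p \<mu> x)) + g/2 * 0\<^sup>2"
      by (intro tendsto_intros)
    then show "(\<lambda>n. Eg p g (\<lambda>x. complex_of_real (tr (real n) x))) \<longlonglongrightarrow> E0 p (\<lambda>x. complex_of_real (phi p \<mu> x))"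
      unfolding Eg_def tr_E0 unfolding tr_def by simp
  qed
  show "\<not> (\<exists>u. H1 u \<and> mass u = \<mu> \<and> Eg p g u = E0 p (\<lambda>x. complex_of_real (phi p \<mu> x)))"
  proof
    assume "\<exists>u. H1 u \<and> mass u = \<mu> \<and> Eg p g u = E0 p (\<lambda>x. complex_of_real (phi p \<mu> x))"
    then obtain u where H: "H1 u" and m: "mass u = \<mu>" and e: "Eg p g u = E0 p (\<lambda>x. complex_of_real (phi p \<mu> x))" by blast
    have le: "E0 p (\<lambda>x. complex_of_real (phi p \<mu> x)) \<le> E0 p u" by (rule E0_phi_le[OF H m])
    have nn: "0 \<le> g/2 * (cmod (u 0))\<^sup>2" using g by simp
    have "g/2 * (cmod (u 0))\<^sup>2 = 0" using e le nn unfolding Eg_def by linarith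
    then have "u 0 = 0" using g by simp
    moreover have "E0 p u \<le> E0 p (\<lambda>x. complex_of_real (phi p \<mu> x))" using e nn unfolding Eg_def by linarith
    ultimately show False using u_zero_if[OF H m] by blast
  qed
qed

end

theorem lemma6p1:
  fixes p \<mu> :: real and V :: "real \<Rightarrow> real"
  assumes "2 < p" and "p < 6" and "0 < \<mu>"
    and "continuous_on UNIV V" and "\<forall>x. 0 \<le> V x" and "\<exists>x. V x \<noteq> 0"
    and "(V \<longlongrightarrow> 0) at_infinity"
  shows "Inf {EV p V u | u. H1 u \<and> mass u = \<mu>} = E0 p (\<lambda>x. complex_of_real (phi p \<mu> x))
       \<and> \<not> (\<exists>u. H1 u \<and> mass u = \<mu> \<and> EV p V u = E0 p (\<lambda>x. complex_of_real (phi p \<mu> x)))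
       \<and> (\<forall>g>0. Inf {Eg p g u | u. H1 u \<and> mass u = \<mu>} = E0 p (\<lambda>x. complex_of_real (phi p \<mu> x))
              \<and> \<not> (\<exists>u. H1 u \<and> mass u = \<mu> \<and> Eg p g u = E0 p (\<lambda>x. complex_of_real (phi p \<mu> x))))"
proof -
  interpret sol p \<mu> by unfold_locales (use assms in auto)
  show ?thesis using main_V[OF assms(4-7)] main_g by blast
qed

end
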